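(* Let $c_0,z_0>0$ and let $R_{III,2}(z,\varepsilon)$ be defined as in the context. If \begin{equation*} \int_{-z_0}^{z_0}\|R_{III}(t(s,\varepsilon),\varepsilon)\|ds=o\left(\varepsilon^{\frac23}\right) \text{ as }\varepsilon\rightarrow0^+, \end{equation*} then the system \begin{equation*} u_{III,2}'(z) =\left( c_0 \left( \begin{array}{cc} 0 & 1 \\ z & 0 \\ \end{array} \right) + R_{III,2}(z,\varepsilon) \right) u_{III,2}(z) \end{equation*} has a matrix solution $U_{III,2}(z,\varepsilon)$ such that for every $z\in[-z_0,z_0]$ \begin{equation*} U_{III,2}(z,\varepsilon)\rightarrow \left( \begin{array}{cc} \mathrm{Ai}(c_0^{\frac23}z) & \mathrm{Bi}(c_0^{\frac23}z) \\ c_0^{-\frac13}\mathrm{Ai}\,'(c_0^{\frac23}z) & c_0^{-\frac13}\mathrm{Bi}\,'(c_0^{\frac23}z) \\ \end{array} \right) \text{ as }\varepsilon\rightarrow0^+. \end{equation*}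
   Context: Let $\beta>0$, $\gamma\in(\frac12,1)$, $t_0:=(2\beta)^{1/\gamma}$ (the turning point), and $c_0:=\frac{t_0}{4\gamma}$. Let $\varepsilon>0$ be a small parameter, and use the variable $z(t,\varepsilon):=\varepsilon^{-2/3}\left(1-\frac{t^{2\gamma}}{4\beta^2}\right)$, with inverse $t(z,\varepsilon)=t_0(1-\varepsilon^{2/3}z)^{1/(2\gamma)}$. Let $R_{III}(t,\varepsilon)$ be a $2\times2$ matrix-valued remainder (the perturbation in the system $\varepsilon u'(t)=\left(\begin{pmatrix}\beta/t^{\gamma} & -1/2\\ 1/2 & -\beta/t^{\gamma}\end{pmatrix}+R_{III}(t,\varepsilon)\right)u(t)$). Define $T_{III}(t):=\begin{pmatrix}1 & \frac{\beta}{t^{\gamma}}+\frac12\\ 1 & -\frac{\beta}{t^{\gamma}}-\frac12\end{pmatrix}$, $R_{III,1}(t,\varepsilon):=-\frac{\varepsilon\beta\gamma}{t^{1+\gamma}\left(\frac{\beta}{t^{\gamma}}+\frac12\right)}\begin{pmatrix}0&0\\0&1\end{pmatrix}+T_{III}^{-1}(t)R_{III}(t,\varepsilon)T_{III}(t)$, and \begin{multline*} R_{III,2}(z,\varepsilon):=c_0\left(\frac1{(1-\varepsilon^{\frac23}z)^{1-\frac1{2\gamma}}}\begin{pmatrix}0&1\\ \frac{z}{1-\varepsilon^{\frac23}z}&0\end{pmatrix}-\begin{pmatrix}0&1\\ z&0\end{pmatrix}\right)\\ -\frac{c_0}{\varepsilon^{\frac23}(1-\varepsilon^{\frac23}z)^{1-\frac1{2\gamma}}}\begin{pmatrix}\varepsilon^{\frac13}&0\\0&-2\end{pmatrix}R_{III,1}(t(z,\varepsilon),\varepsilon)\begin{pmatrix}2&0\\0&-\varepsilon^{\frac13}\end{pmatrix}.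 \end{multline*} $\mathrm{Ai}$, $\mathrm{Bi}$ denote the Airy functions. *)

theory Defs
  imports "HOL-Analysis.Analysis" "HOL-Library.Landau_Symbols"
begin

definition mat2 :: "real \<Rightarrow> real \<Rightarrow> real \<Rightarrow> real \<Rightarrow> real^2^2" where
  "mat2 a b c d = (\<chi> i j. if i = 1 then (if j = 1 then a else b) else (if j = 1 then c else d))"

definition t0 :: "real \<Rightarrow> real \<Rightarrow> real" where
  "t0 \<beta> \<gamma> = (2 * \<beta>) powr (1 / \<gamma>)"

definition c0 :: "real \<Rightarrow> real \<Rightarrow> real" where
  "c0 \<beta> \<gamma> = t0 \<beta> \<gamma> / (4 * \<gamma>)"

definition tz :: "real \<Rightarrow> real \<Rightarrow> real \<Rightarrow> real \<Rightarrow> real" where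
  "tz \<beta> \<gamma> z \<epsilon> = t0 \<beta> \<gamma> * (1 - \<epsilon> powr (2/3) * z) powr (1 / (2 * \<gamma>))"

definition T_III :: "real \<Rightarrow> real \<Rightarrow> real \<Rightarrow> real^2^2" where
  "T_III \<beta> \<gamma> t = mat2 1 (\<beta> / t powr \<gamma> + 1/2) 1 (- (\<beta> / t powr \<gamma>) - 1/2)"

definition R_III1 :: "real \<Rightarrow> real \<Rightarrow> (real \<Rightarrow> real \<Rightarrow> real^2^2) \<Rightarrow> real \<Rightarrow> real \<Rightarrow> real^2^2" where
  "R_III1 \<beta> \<gamma> R t \<epsilon> =
     (- (\<epsilon> * \<beta> * \<gamma>) / (t powr (1 + \<gamma>) * (\<beta> / t powr \<gamma> + 1/2))) *\<^sub>R mat2 0 0 0 1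
     + matrix_inv (T_III \<beta> \<gamma> t) ** R t \<epsilon> ** T_III \<beta> \<gamma> t"

definition R_III2 :: "real \<Rightarrow> real \<Rightarrow> (real \<Rightarrow> real \<Rightarrow> real^2^2) \<Rightarrow> real \<Rightarrow> real \<Rightarrow> real^2^2" where
  "R_III2 \<beta> \<gamma> R z \<epsilon> =
     c0 \<beta> \<gamma> *\<^sub>R
       ((1 / (1 - \<epsilon> powr (2/3) * z) powr (1 - 1 / (2 * \<gamma>))) *\<^sub>R
          mat2 0 1 (z / (1 - \<epsilon> powr (2/3) * z)) 0
        - mat2 0 1 z 0)
     - (c0 \<beta> \<gamma> / (\<epsilon> powr (2/3) * (1 - \<epsilon> powr (2/3) * z) powr (1 - 1 / (2 * \<gamma>)))) *\<^sub>R
       (mat2 (\<epsilon> powr (1/3)) 0 0 (-2) ** R_III1 \<beta> \<gamma> R (tz \<beta> \<gamma> z \<epsilon>) \<epsilon>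
          ** mat2 2 0 0 (- (\<epsilon> powr (1/3))))"

text \<open>Airy functions via their Maclaurin series (DLMF 9.4.1, 9.4.2).\<close>
definition airy_f :: "real \<Rightarrow> real" where
  "airy_f x = (\<Sum>k. 3 ^ k * pochhammer (1/3) k * x ^ (3 * k) / fact (3 * k))"

definition airy_g :: "real \<Rightarrow> real" where
  "airy_g x = (\<Sum>k. 3 ^ k * pochhammer (2/3) k * x ^ (3 * k + 1) / fact (3 * k + 1))"

definition Ai :: "real \<Rightarrow> real" where
  "Ai x = airy_f x / (3 powr (2/3) * Gamma (2/3)) - airy_g x / (3 powr (1/3) * Gamma (1/3))"

definition Bi :: "real \<Rightarrow> real" where
  "Bi x = sqrt 3 * (airy_f x / (3 powr (2/3) * Gamma (2/3)) + airy_g x / (3 powr (1/3) * Gamma (1/3)))"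

definition airy_limit :: "real \<Rightarrow> real \<Rightarrow> real^2^2" where
  "airy_limit c z = mat2 (Ai (c powr (2/3) * z)) (Bi (c powr (2/3) * z))
                         (c powr (-1/3) * deriv Ai (c powr (2/3) * z))
                         (c powr (-1/3) * deriv Bi (c powr (2/3) * z))"

end

theory Submission
  imports Defs
begin


lemma norm_mat2x2: "norm (A::real^2^2) = sqrt ((A$1$1)^2 + (A$1$2)^2 + (A$2$1)^2 + (A$2$2)^2)"
  by (simp add: norm_vec_def L2_set_def UNIV_2 real_norm_def power2_abs)
lemma cs2: "(a*b + c*d)^2 \<le> (a^2+c^2)*(b^2+d^2)" for a b c d :: real
proof - have "0 \<le> (a*d - c*b)^2" by simp then show ?thesis by (simp add: power2_eq_square algebra_simps) qed
lemma norm_matmul: "norm ((A::real^2^2) ** (B::real^2^2)) \<le> norm A * norm B"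
proof -
  have e: "(A**B)$i$j = A$i$1*B$1$j + A$i$2*B$2$j" for i j
    by (simp add: matrix_matrix_mult_def sum_2)
  have "(norm (A**B))^2 \<le> (norm A * norm B)^2"
    unfolding norm_mat2x2 power_mult_distrib
    apply (simp add: e)
    using cs2[of "A$1$1" "B$1$1" "A$1$2" "B$2$1"] cs2[of "A$1$1" "B$1$2" "A$1$2" "B$2$2"]
       cs2[of "A$2$1" "B$1$1" "A$2$2" "B$2$1"] cs2[of "A$2$1" "B$1$2" "A$2$2" "B$2$2"]
    by (simp add: algebra_simps)
  then show ?thesis by (simp add: power_mono_iff)
qed
lemma mm_add_r: "((A::real^2^2) + B) ** C = A ** C + B ** C"
  by (simp add: vec_eq_iff matrix_matrix_mult_def sum_2 algebra_simps)
lemma mm_diff_r: "((A::real^2^2) - B) ** C = A ** C - B ** C"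
  by (simp add: vec_eq_iff matrix_matrix_mult_def sum_2 algebra_simps)
lemma mm_diff_l: "(C::real^2^2) ** (A - B) = C ** A - C ** B"
  by (simp add: vec_eq_iff matrix_matrix_mult_def sum_2 algebra_simps)
lemma mm_scaleR_l: "(r *\<^sub>R (A::real^2^2)) ** B = r *\<^sub>R (A ** B)"
  by (simp add: vec_eq_iff matrix_matrix_mult_def sum_2 algebra_simps)
lemma mm_scaleR_r: "(A::real^2^2) ** (r *\<^sub>R B) = r *\<^sub>R (A ** B)"
  by (simp add: vec_eq_iff matrix_matrix_mult_def sum_2 algebra_simps)
lemma bilinear_mm: "bilinear (\<lambda>(x::real^2^2) (y::real^2^2). x ** y)"
  unfolding bilinear_def
  by (auto intro!: linearI simp: matrix_add_ldistrib mm_add_r mm_scaleR_l mm_scaleR_r)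
lemma ai_mm_right:
  fixes A V :: "real \<Rightarrow> real^2^2"
  assumes "A absolutely_integrable_on {a..b}" "continuous_on {a..b} V"
  shows "(\<lambda>s. A s ** V s) absolutely_integrable_on {a..b}"
proof -
  have "bounded (V ` {a..b})" by (simp add: assms(2) compact_continuous_image compact_imp_bounded)
  then show ?thesis
  using absolutely_integrable_bounded_measurable_product[of "\<lambda>x y. y ** x" V "{a..b}" A] assms
    continuous_imp_measurable_on_sets_lebesgue[OF assms(2)]
  using bilinear_mm unfolding bilinear_def by auto
qed
lemma ai_mm_left:
  fixes A V :: "real \<Rightarrow> real^2^2"
  assumes "A absolutely_integrable_on {a..b}" "continuous_on {a..b} V"
  shows "(\<lambda>s. V s ** A s) absolutely_integrable_on {a..b}"
proof -
  have "bounded (V ` {a..b})" by (simp add: assms(2) compact_continuous_image compact_imp_bounded)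
  then show ?thesis
  using absolutely_integrable_bounded_measurable_product[of "\<lambda>x y. x ** y" V "{a..b}" A] assms
    continuous_imp_measurable_on_sets_lebesgue[OF assms(2)]
  using bilinear_mm by auto
qed



lemma int_exp_bound:
  fixes L a x :: real assumes "L > 0" "a \<le> x"
  shows "(\<lambda>s. exp (L*(s-a))) integrable_on {a..x}" "integral {a..x} (\<lambda>s. exp (L*(s-a))) \<le> exp (L*(x-a)) / L"
proof -
  have d: "((\<lambda>s. exp (L*(s-a)) / L) has_vector_derivative exp (L*(s-a))) (at s within {a..x})" for s
    using assms(1)
    by (auto intro!: derivative_eq_intros simp: has_real_derivative_iff_has_vector_derivative[symmetric])
  have hi: "((\<lambda>s. exp (L*(s-a))) has_integral (exp (L*(x-a)) / L - exp (L*(a-a)) / L)) {a..x}"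
    by (rule fundamental_theorem_of_calculus[OF assms(2)]) (use d in auto)
  then show "(\<lambda>s. exp (L*(s-a))) integrable_on {a..x}" by blast
  show "integral {a..x} (\<lambda>s. exp (L*(s-a))) \<le> exp (L*(x-a)) / L"
    using hi assms(1) by (simp add: integral_unique)
qed




lemma volterra:
  fixes A Y :: "real \<Rightarrow> real^2^2" and a b :: real
  assumes ab: "a \<le> b" and Acont: "continuous_on {a..b} A" and Ycont: "continuous_on {a..b} Y"
    and Yeq: "\<forall>z\<in>{a..b}. Y z = Y a + integral {a..z} (\<lambda>s. A s ** Y s)"
  shows "\<exists>K. \<forall>B \<delta>. B absolutely_integrable_on {a..b} \<and> integral {a..b} (\<lambda>s. norm (B s)) \<le> \<delta> \<and> \<delta> \<le> 1/4 \<longrightarrow>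
     (\<exists>U. continuous_on {a..b} U \<and> (\<lambda>s. (A s + B s) ** U s) absolutely_integrable_on {a..b}
        \<and> (\<forall>z\<in>{a..b}. U z = U a + integral {a..z} (\<lambda>s. (A s + B s) ** U s))
        \<and> (\<forall>z\<in>{a..b}. norm (U z - Y z) \<le> K * \<delta>))"
proof -
  have cb: "cbox a b = {a..b}" by simp
  obtain M0 where M0: "M0 \<ge> 0" "\<And>s. s \<in> {a..b} \<Longrightarrow> norm (A s) \<le> M0"
  proof -
    have "bounded (A ` {a..b})" by (simp add: Acont compact_continuous_image compact_imp_bounded)
    then obtain M where "M > 0" "\<And>s. s \<in> {a..b} \<Longrightarrow> norm (A s) \<le> M" by (auto simp: bounded_pos)
    then show ?thesis using that[of M] by auto
  qed
  obtain KY where KY: "KY \<ge> 0" "\<And>s. s \<in> {a..b} \<Longrightarrow> norm (Y s) \<le> KY"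
  proof -
    have "bounded (Y ` {a..b})" by (simp add: Ycont compact_continuous_image compact_imp_bounded)
    then obtain M where "M > 0" "\<And>s. s \<in> {a..b} \<Longrightarrow> norm (Y s) \<le> M" by (auto simp: bounded_pos)
    then show ?thesis using that[of M] by auto
  qed
  define L where "L = 4 * M0 + 1"
  have L: "L > 0" "M0 / L \<le> 1/4" using M0 by (auto simp: L_def field_simps)
  define e where "e = (\<lambda>s. exp (L * (s - a)))"
  define w where "w = (\<lambda>s. exp (- (L * (s - a))))"
  have ew: "e s * w s = 1" for s by (simp add: e_def w_def flip: exp_add)
  have econt: "continuous_on S e" for S unfolding e_def by (intro continuous_intros)
  have wcont: "continuous_on S w" for S unfolding w_def by (intro continuous_intros)
  have emono: "e s \<le> e x" if "s \<le> x" for s x using that L unfolding e_def by auto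
  have epos: "e s > 0" for s unfolding e_def by auto
  have wle1: "w x \<le> 1" if "x \<ge> a" for x using that L unfolding w_def by auto
  have wpos: "w s > 0" for s unfolding w_def by auto
  have ebd: "e x \<le> exp (L * (b - a))" if "x \<le> b" for x using that L unfolding e_def by auto
  show ?thesis
  proof (intro exI[of _ "2 * exp (L * (b - a)) * KY"] allI impI, elim conjE)
    fix B :: "real \<Rightarrow> real^2^2" and \<delta> :: real
    assume Bai: "B absolutely_integrable_on {a..b}" and Bd: "integral {a..b} (\<lambda>s. norm (B s)) \<le> \<delta>"
      and d14: "\<delta> \<le> 1/4"
    define AB where "AB = (\<lambda>s. A s + B s)"
    have Aai: "A absolutely_integrable_on {a..b}" using Acont absolutely_integrable_continuous_real by blast
    have ABai: "AB absolutely_integrable_on {a..b}" unfolding AB_def using Aai Bai by (rule set_integral_add)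
    have nBint: "(\<lambda>s. norm (B s)) integrable_on {a..x}" if "x \<in> {a..b}" for x
    proof -
      have "(\<lambda>s. norm (B s)) integrable_on {a..b}" using Bai by (simp add: absolutely_integrable_on_def)
      then show ?thesis by (elim integrable_on_subinterval) (use that in auto)
    qed
    have nBle: "integral {a..x} (\<lambda>s. norm (B s)) \<le> \<delta>" if "x \<in> {a..b}" for x
    proof -
      have "integral {a..x} (\<lambda>s. norm (B s)) \<le> integral {a..b} (\<lambda>s. norm (B s))"
        by (rule integral_subset_le) (use that nBint[of b] nBint[OF that] ab in auto)
      then show ?thesis using Bd by linarith
    qed
    have d0: "\<delta> \<ge> 0"
    proof -
      have "0 \<le> integral {a..b} (\<lambda>s. norm (B s))" by (rule integral_nonneg) (use nBint[of b] ab in auto)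
      then show ?thesis using Bd by linarith
    qed
    have ABV: "(\<lambda>s. AB s ** V s) absolutely_integrable_on {a..b}" if "continuous_on {a..b} V" for V :: "real \<Rightarrow> real^2^2"
      using ai_mm_right[OF ABai that] .
    have ABVi: "(\<lambda>s. AB s ** V s) integrable_on {a..x}" if "continuous_on {a..b} V" "x \<in> {a..b}" for V :: "real \<Rightarrow> real^2^2" and x
    proof -
      have "(\<lambda>s. AB s ** V s) integrable_on {a..b}" using ABV[OF that(1)] by (simp add: absolutely_integrable_on_def)
      then show ?thesis by (elim integrable_on_subinterval) (use that in auto)
    qed
    define C where "C = Y a"
    define F where "F = (\<lambda>(W :: real \<Rightarrow>\<^sub>C (real^2^2)) x. w x *\<^sub>R (C + integral {a..x} (\<lambda>s. AB s ** (e s *\<^sub>R apply_bcontfun W s))))"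
    have eWcont: "continuous_on S (\<lambda>s. e s *\<^sub>R apply_bcontfun W s)" for W :: "real \<Rightarrow>\<^sub>C (real^2^2)" and S
      by (rule continuous_on_scaleR[OF econt]) simp
    have Fcont: "continuous_on {a..b} (F W)" for W :: "real \<Rightarrow>\<^sub>C (real^2^2)"
    proof -
      have "continuous_on {a..b} (\<lambda>x. integral {a..x} (\<lambda>s. AB s ** (e s *\<^sub>R apply_bcontfun W s)))"
        by (rule indefinite_integral_continuous_1) (use ABVi[OF eWcont, of b] ab in auto)
      then show ?thesis unfolding F_def by (intro continuous_intros wcont) auto
    qed
    define \<Phi> where "\<Phi> = (\<lambda>W. SOME g :: real \<Rightarrow>\<^sub>C (real^2^2). \<forall>x. apply_bcontfun g x = F W (clamp a b x))"
    have \<Phi>: "apply_bcontfun (\<Phi> W) x = F W (clamp a b x)" for W :: "real \<Rightarrow>\<^sub>C (real^2^2)" and x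
    proof -
      have fc: "continuous_on (cbox a b) (F W)" using Fcont[of W] cb by simp
      obtain g :: "real \<Rightarrow>\<^sub>C (real^2^2)" where "\<And>x. x \<in> cbox a b \<Longrightarrow> apply_bcontfun g x = F W x" "\<And>x. apply_bcontfun g x = F W (clamp a b x)"
        by (rule continuous_on_cbox_bcontfunE[OF fc]) auto
      then have "\<exists>g :: real \<Rightarrow>\<^sub>C (real^2^2). \<forall>x. apply_bcontfun g x = F W (clamp a b x)" by blast
      then have "\<forall>x. apply_bcontfun (\<Phi> W) x = F W (clamp a b x)" unfolding \<Phi>_def by (rule someI_ex)
      then show ?thesis by blast
    qed
    have clampI: "clamp a b x \<in> {a..b}" for x using clamp_in_interval[of a b x] ab cb by auto
    have key: "norm (integral {a..x} (\<lambda>s. AB s ** (e s *\<^sub>R D s))) \<le> e x * d / 2"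
      if x: "x \<in> {a..b}" and Dc: "continuous_on {a..b} D" and Dd: "\<And>s. norm (D s) \<le> d" for D :: "real \<Rightarrow> real^2^2" and d x
    proof -
      have dge: "d \<ge> 0" using Dd[of a] norm_ge_zero order_trans by blast
      have eDc: "continuous_on {a..b} (\<lambda>s. e s *\<^sub>R D s)" by (intro continuous_intros econt Dc)
      have ie: "(\<lambda>s. e s) integrable_on {a..x}" "integral {a..x} e \<le> e x / L"
        using int_exp_bound[OF L(1), of a x] x unfolding e_def by auto
      have gi: "(\<lambda>s. (M0 * e s + norm (B s) * e x) * d) integrable_on {a..x}"
        using ie(1) nBint[OF x] by (intro integrable_on_mult_left integrable_add integrable_on_mult_right) auto
      have "norm (integral {a..x} (\<lambda>s. AB s ** (e s *\<^sub>R D s))) \<le> integral {a..x} (\<lambda>s. (M0 * e s + norm (B s) * e x) * d)"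
      proof (rule integral_norm_bound_integral[OF ABVi[OF eDc x] gi])
        fix s assume s: "s \<in> {a..x}"
        have sI: "s \<in> {a..b}" using s x by auto
        have "norm (AB s ** (e s *\<^sub>R D s)) \<le> norm (AB s) * (e s * norm (D s))"
          using norm_matmul[of "AB s" "e s *\<^sub>R D s"] epos[of s] by (simp add: abs_of_pos)
        also have "\<dots> \<le> (M0 + norm (B s)) * (e s * d)"
          using M0(2)[OF sI] M0(1) Dd[of s] epos[of s] unfolding AB_def
          by (intro mult_mono) (auto intro: order_trans[OF norm_triangle_ineq] add_nonneg_nonneg)
        also have "\<dots> \<le> (M0 * e s + norm (B s) * e x) * d"
          using emono[of s x] s dge M0 by (simp add: algebra_simps mult_left_mono mult_right_mono mult_nonneg_nonneg)
        finally show "norm (AB s ** (e s *\<^sub>R D s)) \<le> (M0 * e s + norm (B s) * e x) * d" .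
      qed
      also have "\<dots> = (M0 * integral {a..x} e + e x * integral {a..x} (\<lambda>s. norm (B s))) * d"
        using ie(1) nBint[OF x]
        by (simp add: integral_add integrable_on_mult_left integrable_on_mult_right algebra_simps)
      also have "\<dots> \<le> (M0 * (e x / L) + e x * \<delta>) * d"
        using ie(2) nBle[OF x] M0 dge epos[of x] by (intro mult_right_mono add_mono mult_left_mono) auto
      also have "\<dots> = e x * (M0 / L + \<delta>) * d" by (simp add: algebra_simps)
      also have "\<dots> \<le> e x * (1/2) * d"
      proof -
        have "M0 / L + \<delta> \<le> 1/2" using L(2) d14 by linarith
        then show ?thesis using dge epos[of x] by (intro mult_right_mono mult_left_mono) auto
      qed
      finally show ?thesis by simp
    qed
    have contr: "dist (\<Phi> W1) (\<Phi> W2) \<le> 1/2 * dist W1 W2" for W1 W2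
    proof (rule dist_bound)
      fix x
      define c where "c = clamp a b x"
      have c: "c \<in> {a..b}" using clampI c_def by simp
      define D where "D = (\<lambda>s. apply_bcontfun W1 s - apply_bcontfun W2 s)"
      have "F W1 c - F W2 c = w c *\<^sub>R integral {a..c} (\<lambda>s. AB s ** (e s *\<^sub>R D s))"
      proof -
        have eq: "integral {a..c} (\<lambda>s. AB s ** (e s *\<^sub>R D s)) =
           integral {a..c} (\<lambda>s. AB s ** (e s *\<^sub>R apply_bcontfun W1 s)) - integral {a..c} (\<lambda>s. AB s ** (e s *\<^sub>R apply_bcontfun W2 s))"
          unfolding D_def using ABVi[OF eWcont c, of W1] ABVi[OF eWcont c, of W2]
          by (simp add: integral_diff[symmetric] mm_diff_l scaleR_diff_right)
        show ?thesis unfolding F_def eq by (simp add: scaleR_diff_right scaleR_add_right)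
      qed
      moreover have "norm (integral {a..c} (\<lambda>s. AB s ** (e s *\<^sub>R D s))) \<le> e c * dist W1 W2 / 2"
        by (rule key[OF c]) (auto simp: D_def intro!: continuous_intros simp flip: dist_norm intro: dist_bounded)
      ultimately have "norm (F W1 c - F W2 c) \<le> w c * (e c * dist W1 W2 / 2)"
        using wpos[of c] by (simp add: mult_left_mono)
      also have "\<dots> = 1/2 * dist W1 W2" using ew[of c] by (simp add: algebra_simps)
      finally show "dist (apply_bcontfun (\<Phi> W1) x) (apply_bcontfun (\<Phi> W2) x) \<le> 1/2 * dist W1 W2"
        by (simp add: \<Phi> c_def dist_norm)
    qed
    obtain Ws where Ws: "\<Phi> Ws = Ws" using banach_fix_type[of "1/2" \<Phi>] contr by auto
    define U where "U = (\<lambda>s. e s *\<^sub>R apply_bcontfun Ws s)"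
    have Ucont: "continuous_on {a..b} U" unfolding U_def by (rule eWcont)
    have Ueq0: "U z = C + integral {a..z} (\<lambda>s. AB s ** U s)" if z: "z \<in> {a..b}" for z
    proof -
      have "U z = e z *\<^sub>R F Ws z" unfolding U_def using \<Phi>[of Ws z] Ws z clamp_cancel_cbox[of z a b] cb
        by simp
      also have "\<dots> = C + integral {a..z} (\<lambda>s. AB s ** U s)"
        unfolding F_def U_def using ew[of z] by (simp add: scaleR_add_right)
      finally show ?thesis .
    qed
    have Ua: "U a = C" using Ueq0[of a] ab by simp
    obtain WY :: "real \<Rightarrow>\<^sub>C (real^2^2)" where WY: "\<And>x. x \<in> {a..b} \<Longrightarrow> apply_bcontfun WY x = w x *\<^sub>R Y x"
        "\<And>x. apply_bcontfun WY x = w (clamp a b x) *\<^sub>R Y (clamp a b x)"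
    proof -
      have fc: "continuous_on (cbox a b) (\<lambda>x. w x *\<^sub>R Y x)" unfolding cb by (rule continuous_on_scaleR[OF wcont Ycont])
      obtain g :: "real \<Rightarrow>\<^sub>C (real^2^2)" where g1: "\<And>x. x \<in> cbox a b \<Longrightarrow> apply_bcontfun g x = w x *\<^sub>R Y x"
        and g2: "\<And>x. apply_bcontfun g x = w (clamp a b x) *\<^sub>R Y (clamp a b x)"
        by (rule continuous_on_cbox_bcontfunE[OF fc]) auto
      show ?thesis by (rule that[of g]) (use g1 g2 cb in auto)
    qed
    have near: "dist (\<Phi> WY) WY \<le> \<delta> * KY"
    proof (rule dist_bound)
      fix x
      define c where "c = clamp a b x"
      have c: "c \<in> {a..b}" using clampI c_def by simp
      have eWY: "e s *\<^sub>R apply_bcontfun WY s = Y s" if "s \<in> {a..c}" for s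
        using that c WY(1)[of s] ew[of s] by (auto simp: scaleR_scaleR)
      have i1: "integral {a..c} (\<lambda>s. AB s ** (e s *\<^sub>R apply_bcontfun WY s)) = integral {a..c} (\<lambda>s. AB s ** Y s)"
        by (rule integral_cong) (simp add: eWY)
      have YA: "(\<lambda>s. A s ** Y s) integrable_on {a..c}"
      proof -
        have "(\<lambda>s. A s ** Y s) integrable_on {a..b}" using ai_mm_right[OF Aai Ycont] by (simp add: absolutely_integrable_on_def)
        then show ?thesis by (elim integrable_on_subinterval) (use c in auto)
      qed
      have YB: "(\<lambda>s. B s ** Y s) integrable_on {a..c}"
      proof -
        have "(\<lambda>s. B s ** Y s) integrable_on {a..b}" using ai_mm_right[OF Bai Ycont] by (simp add: absolutely_integrable_on_def)
        then show ?thesis by (elim integrable_on_subinterval) (use c in auto)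
      qed
      have i2: "integral {a..c} (\<lambda>s. AB s ** Y s) = integral {a..c} (\<lambda>s. A s ** Y s) + integral {a..c} (\<lambda>s. B s ** Y s)"
        unfolding AB_def mm_add_r using YA YB by (rule integral_add)
      have "F WY c - apply_bcontfun WY c = w c *\<^sub>R integral {a..c} (\<lambda>s. B s ** Y s)"
        unfolding F_def i1 i2 C_def WY(1)[OF c] using Yeq[rule_format, OF c] by (simp add: algebra_simps)
      moreover have "norm (integral {a..c} (\<lambda>s. B s ** Y s)) \<le> integral {a..c} (\<lambda>s. norm (B s) * KY)"
      proof (rule integral_norm_bound_integral[OF YB])
        show "(\<lambda>s. norm (B s) * KY) integrable_on {a..c}" using nBint[OF c] by (rule integrable_on_mult_left)
        fix s assume "s \<in> {a..c}" then have "s \<in> {a..b}" using c by auto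
        then show "norm (B s ** Y s) \<le> norm (B s) * KY"
          using norm_matmul[of "B s" "Y s"] KY(2) by (meson mult_left_mono norm_ge_zero order_trans)
      qed
      moreover have "integral {a..c} (\<lambda>s. norm (B s) * KY) \<le> \<delta> * KY"
        using nBle[OF c] KY(1) by (simp add: mult_right_mono)
      ultimately have "norm (F WY c - apply_bcontfun WY c) \<le> w c * (\<delta> * KY)"
        using wpos[of c] by (simp add: mult_left_mono order_trans)
      also have "\<dots> \<le> \<delta> * KY" using wle1[of c] c d0 KY(1)
        by (intro mult_left_le_one_le) (auto simp: less_imp_le[OF wpos])
      finally show "dist (apply_bcontfun (\<Phi> WY) x) (apply_bcontfun WY x) \<le> \<delta> * KY"
        using WY(1)[OF c] WY(2)[of x] by (simp add: \<Phi> c_def dist_norm)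
    qed
    have "dist Ws WY \<le> dist (\<Phi> Ws) (\<Phi> WY) + dist (\<Phi> WY) WY" using Ws dist_triangle by metis
    then have dW: "dist Ws WY \<le> 2 * \<delta> * KY" using contr[of Ws WY] near by linarith
    show "\<exists>U. continuous_on {a..b} U \<and> (\<lambda>s. (A s + B s) ** U s) absolutely_integrable_on {a..b}
        \<and> (\<forall>z\<in>{a..b}. U z = U a + integral {a..z} (\<lambda>s. (A s + B s) ** U s))
        \<and> (\<forall>z\<in>{a..b}. norm (U z - Y z) \<le> 2 * exp (L * (b - a)) * KY * \<delta>)"
    proof (intro exI[of _ U] conjI ballI Ucont)
      show "(\<lambda>s. (A s + B s) ** U s) absolutely_integrable_on {a..b}" using ABV[OF Ucont] unfolding AB_def .
      fix z assume z: "z \<in> {a..b}"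
      show "U z = U a + integral {a..z} (\<lambda>s. (A s + B s) ** U s)" using Ueq0[OF z] Ua unfolding AB_def by simp
      have "U z - Y z = e z *\<^sub>R (apply_bcontfun Ws z - apply_bcontfun WY z)"
        unfolding U_def using WY(1)[OF z] ew[of z] by (simp add: scaleR_diff_right)
      then have "norm (U z - Y z) = e z * dist (apply_bcontfun Ws z) (apply_bcontfun WY z)"
        using epos[of z] by (simp add: dist_norm)
      also have "\<dots> \<le> exp (L * (b - a)) * (2 * \<delta> * KY)"
        using ebd[of z] z dist_bounded[of Ws z WY] dW epos[of z]
        by (intro mult_mono) auto
      finally show "norm (U z - Y z) \<le> 2 * exp (L * (b - a)) * KY * \<delta>" by (simp add: algebra_simps)
    qed
  qed
qed




definition af :: "nat \<Rightarrow> real" where "af k = 3^k * pochhammer (1/3) k / fact (3*k)"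
definition ag :: "nat \<Rightarrow> real" where "ag k = 3^k * pochhammer (2/3) k / fact (3*k+1)"

lemma rec_alg: "P1 \<noteq> 0 \<Longrightarrow> P2 \<noteq> 0 \<Longrightarrow> P3 \<noteq> 0 \<Longrightarrow> F \<noteq> 0 \<Longrightarrow>
  (3 * X) * (Q * (P1 / 3)) / (F * (P1 * P2 * P3)) * (P2 * P3) = X * Q / (F::real)"
  by (simp add: field_simps)

lemma af_rec: "af (Suc k) * ((3 * real k + 2) * (3 * real k + 3)) = af k"
proof -
  have e: "3 * Suc k = Suc (Suc (Suc (3*k)))" by simp
  have f: "(fact (3 * Suc k) :: real) = fact (3*k) * ((3 * real k + 1) * (3 * real k + 2) * (3 * real k + 3))"
    unfolding e fact_Suc by (simp add: algebra_simps)
  have p: "pochhammer (1/3::real) (Suc k) = pochhammer (1/3) k * ((3 * real k + 1) / 3)"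
    by (simp add: pochhammer_Suc field_simps)
  have "af (Suc k) * ((3 * real k + 2) * (3 * real k + 3)) = (3 * 1) * (3^k * pochhammer (1/3) k * ((3 * real k + 1) / 3)) / (fact (3*k) * ((3 * real k + 1) * (3 * real k + 2) * (3 * real k + 3))) * ((3 * real k + 2) * (3 * real k + 3))"
    unfolding af_def p f by (simp add: algebra_simps)
  also have "\<dots> = 1 * (3^k * pochhammer (1/3) k) / fact (3*k)"
    by (rule rec_alg) auto
  finally show ?thesis by (simp add: af_def)
qed

lemma ag_rec: "ag (Suc k) * ((3 * real k + 3) * (3 * real k + 4)) = ag k"
proof -
  have e: "3 * Suc k + 1 = Suc (Suc (Suc (3*k+1)))" by simp
  have f: "(fact (3 * Suc k + 1) :: real) = fact (3*k+1) * ((3 * real k + 2) * (3 * real k + 3) * (3 * real k + 4))"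
    unfolding e fact_Suc by (simp add: algebra_simps)
  have p: "pochhammer (2/3::real) (Suc k) = pochhammer (2/3) k * ((3 * real k + 2) / 3)"
    by (simp add: pochhammer_Suc field_simps)
  have "ag (Suc k) * ((3 * real k + 3) * (3 * real k + 4)) = (3 * 1) * (3^k * pochhammer (2/3) k * ((3 * real k + 2) / 3)) / (fact (3*k+1) * ((3 * real k + 2) * (3 * real k + 3) * (3 * real k + 4))) * ((3 * real k + 3) * (3 * real k + 4))"
    unfolding ag_def p f by (simp add: algebra_simps)
  also have "\<dots> = 1 * (3^k * pochhammer (2/3) k) / fact (3*k+1)"
    by (rule rec_alg) auto
  finally show ?thesis by (simp add: ag_def)
qed

lemma coef_bound:
  fixes a :: "nat \<Rightarrow> real" and p :: nat
  assumes "a 0 = 1" "\<And>k. a (Suc k) * ((3 * real k + real p + 2) * (3 * real k + real p + 3)) = a k"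
  shows "0 \<le> a k \<and> a k \<le> 1 / fact k"
proof (induction k)
  case 0 then show ?case using assms by simp
next
  case (Suc k)
  have pos: "(0::real) < (3 * real k + real p + 2) * (3 * real k + real p + 3)" by (intro mult_pos_pos) linarith+
  have eq: "a (Suc k) = a k / ((3 * real k + real p + 2) * (3 * real k + real p + 3))" using assms(2)[of k] pos by (simp add: field_simps)
  have ge: "real (Suc k) \<le> (3 * real k + real p + 2) * (3 * real k + real p + 3)"
  proof -
    have "real (Suc k) \<le> 3 * real k + real p + 2" by simp
    also have "\<dots> \<le> (3 * real k + real p + 2) * (3 * real k + real p + 3)"
      by (rule mult_le_cancel_left1[THEN iffD2]) auto
    finally show ?thesis .
  qed
  have "a (Suc k) \<le> (1 / fact k) / real (Suc k)"
    unfolding eq using Suc ge by (intro frac_le) auto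
  also have "\<dots> = 1 / fact (Suc k)" by (simp add: fact_Suc field_simps)
  finally show ?case using Suc pos eq by simp
qed

lemma gap_summable:
  fixes a :: "nat \<Rightarrow> real"
  assumes "\<And>k. 0 \<le> a k \<and> a k \<le> 1 / fact k"
  shows "summable (\<lambda>k. a k * y^(3*k+r))"
proof (rule summable_comparison_test[of _ "\<lambda>k. \<bar>y\<bar>^r * (inverse (fact k) * (\<bar>y\<bar>^3)^k)"])
  show "summable (\<lambda>k. \<bar>y\<bar>^r * (inverse (fact k) * (\<bar>y\<bar>^3)^k))"
    by (intro summable_mult summable_exp)
  show "\<exists>N. \<forall>n\<ge>N. norm (a n * y ^ (3 * n + r)) \<le> \<bar>y\<bar>^r * (inverse (fact n) * (\<bar>y\<bar>^3)^n)"
  proof (intro exI allI impI)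
    fix n :: nat
    have pc: "\<bar>y\<bar>^(3*n+r) = \<bar>y\<bar>^r * (\<bar>y\<bar>^3)^n" by (metis power_add power_mult mult.commute)
    have "norm (a n * y ^ (3 * n + r)) = \<bar>a n\<bar> * \<bar>y\<bar>^(3*n+r)"
      by (simp add: abs_mult power_abs)
    also have "\<dots> = a n * (\<bar>y\<bar>^r * (\<bar>y\<bar>^3)^n)"
      using assms[of n] unfolding pc by simp
    also have "\<dots> \<le> inverse (fact n) * (\<bar>y\<bar>^r * (\<bar>y\<bar>^3)^n)"
      using assms[of n] by (intro mult_right_mono) (auto simp: divide_inverse)
    also have "\<dots> = \<bar>y\<bar>^r * (inverse (fact n) * (\<bar>y\<bar>^3)^n)" by (simp only: mult.left_commute)
    finally show "norm (a n * y ^ (3 * n + r)) \<le> \<bar>y\<bar>^r * (inverse (fact n) * (\<bar>y\<bar>^3)^n)" .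
  qed
qed

definition gapc :: "(nat \<Rightarrow> real) \<Rightarrow> nat \<Rightarrow> nat \<Rightarrow> real" where
  "gapc a r n = (if n mod 3 = r then a (n div 3) else 0)"

lemma gap_sums:
  fixes a :: "nat \<Rightarrow> real"
  assumes "r < 3" "(\<lambda>k. a k * y^(3*k+r)) sums s"
  shows "(\<lambda>n. gapc a r n * y^n) sums s"
proof -
  have sm: "strict_mono (\<lambda>k::nat. 3*k+r)" by (auto simp: strict_mono_def)
  have z: "gapc a r n * y^n = 0" if "n \<notin> range (\<lambda>k. 3*k+r)" for n
  proof -
    have "n mod 3 \<noteq> r"
    proof
      assume "n mod 3 = r"
      then have "n = 3 * (n div 3) + r" using div_mult_mod_eq[of n 3] by linarith
      then show False using that by blast
    qed
    then show ?thesis by (simp add: gapc_def)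
  qed
  have e: "gapc a r (3*k+r) * y^(3*k+r) = a k * y^(3*k+r)" for k
    using assms(1) by (simp add: gapc_def)
  show ?thesis using sums_mono_reindex[OF sm, of "\<lambda>n. gapc a r n * y^n" s] z assms(2) e by simp
qed

lemma gap_diffs:
  fixes a :: "nat \<Rightarrow> real"
  assumes "r < 2" "\<And>k. a (Suc k) * ((3 * real k + real r + 2) * (3 * real k + real r + 3)) = a k"
  shows "diffs (diffs (gapc a r)) n = (if n = 0 then 0 else gapc a r (n - 1))"
proof -
  have dd: "diffs (diffs (gapc a r)) n = (real n + 1) * ((real n + 2) * gapc a r (n+2))"
    by (simp add: diffs_def algebra_simps)
  show ?thesis
  proof (cases "(n+2) mod 3 = r")
    case True
    define j where "j = (n+2) div 3"
    have nj: "n + 2 = 3*j + r" using True j_def div_mult_mod_eq[of "n+2" 3] by linarith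
    then obtain k where k: "j = Suc k" using assms(1) by (cases j) auto
    have n: "n = 3*k+r+1" using nj k by simp
    have "diffs (diffs (gapc a r)) n = ((3 * real k + real r + 2) * (3 * real k + real r + 3)) * a (Suc k)"
    proof -
      have g: "gapc a r (n+2) = a (Suc k)" using True j_def k by (simp add: gapc_def)
      show ?thesis unfolding dd g by (simp add: n algebra_simps)
    qed
    also have "\<dots> = a k" using assms(2)[of k] by (simp add: algebra_simps)
    also have "\<dots> = (if n = 0 then 0 else gapc a r (n - 1))" using n assms(1) by (simp add: gapc_def)
    finally show ?thesis .
  next
    case False
    have "n \<noteq> 0 \<Longrightarrow> (n - 1) mod 3 \<noteq> r"
    proof
      assume "n \<noteq> 0" "(n - 1) mod 3 = r"
      then have "(n+2) mod 3 = r"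
      proof -
        have e: "n + 2 = (n - 1) + 3" using \<open>n \<noteq> 0\<close> by simp
        have "(n+2) mod 3 = (n - 1) mod 3" unfolding e by (rule mod_add_self2)
        then show ?thesis using \<open>(n - 1) mod 3 = r\<close> by simp
      qed
      then show False using False by simp
    qed
    then show ?thesis unfolding dd using False by (auto simp: gapc_def)
  qed
qed

lemma series_ode:
  fixes c :: "nat \<Rightarrow> real"
  assumes sm: "\<And>y. summable (\<lambda>n. c n * y^n)"
    and dd: "\<And>n. diffs (diffs c) n = (if n = 0 then 0 else c (n - 1))"
  shows "((\<lambda>x. \<Sum>n. c n * x^n) has_real_derivative (\<Sum>n. diffs c n * x^n)) (at x)"
    and "((\<lambda>x. \<Sum>n. diffs c n * x^n) has_real_derivative x * (\<Sum>n. c n * x^n)) (at x)"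
proof -
  show "((\<lambda>x. \<Sum>n. c n * x^n) has_real_derivative (\<Sum>n. diffs c n * x^n)) (at x)"
    by (rule termdiffs_strong_converges_everywhere[OF sm])
  have sm1: "\<And>y. summable (\<lambda>n. diffs c n * y^n)" by (rule termdiff_converges_all[OF sm])
  have "((\<lambda>x. \<Sum>n. diffs c n * x^n) has_real_derivative (\<Sum>n. diffs (diffs c) n * x^n)) (at x)"
    by (rule termdiffs_strong_converges_everywhere[OF sm1])
  moreover have "(\<Sum>n. diffs (diffs c) n * x^n) = x * (\<Sum>n. c n * x^n)"
  proof -
    define f where "f = (\<lambda>n. diffs (diffs c) n * x^n)"
    have "(\<lambda>n. x * (c n * x^n)) sums (x * (\<Sum>n. c n * x^n))"
      by (intro sums_mult summable_sums sm)
    moreover have "(\<lambda>n. f (Suc n)) = (\<lambda>n. x * (c n * x^n))"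
      unfolding f_def by (simp add: dd algebra_simps)
    ultimately have "(\<lambda>n. f (Suc n)) sums (x * (\<Sum>n. c n * x^n))" by simp
    then have "f sums (x * (\<Sum>n. c n * x^n) + f 0)" by (simp add: sums_Suc_iff)
    moreover have "f 0 = 0" unfolding f_def by (simp add: dd)
    ultimately show ?thesis unfolding f_def by (simp add: sums_iff)
  qed
  ultimately show "((\<lambda>x. \<Sum>n. diffs c n * x^n) has_real_derivative x * (\<Sum>n. c n * x^n)) (at x)" by simp
qed

lemma airy_f_eq: "airy_f x = (\<Sum>n. gapc af 0 n * x^n)"
proof -
  have b: "\<And>k. 0 \<le> af k \<and> af k \<le> 1 / fact k"
    by (rule coef_bound[where p=0]) (use af_rec in \<open>auto simp: af_def\<close>)
  have "(\<lambda>k. af k * x^(3*k+0)) sums airy_f x"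
    unfolding airy_f_def using gap_summable[OF b, of x 0] by (simp add: af_def summable_sums)
  from gap_sums[OF _ this] show ?thesis by (simp add: sums_iff)
qed

lemma airy_g_eq: "airy_g x = (\<Sum>n. gapc ag 1 n * x^n)"
proof -
  have b: "\<And>k. 0 \<le> ag k \<and> ag k \<le> 1 / fact k"
    by (rule coef_bound[where p=1]) (use ag_rec in \<open>auto simp: ag_def algebra_simps\<close>)
  have "(\<lambda>k. ag k * x^(3*k+1)) sums airy_g x"
    unfolding airy_g_def using gap_summable[OF b, of x 1] by (simp add: ag_def summable_sums)
  from gap_sums[OF _ this] show ?thesis by (simp add: sums_iff)
qed

lemma airy_f_ode: "\<exists>f1. \<forall>x. (airy_f has_real_derivative f1 x) (at x) \<and> (f1 has_real_derivative x * airy_f x) (at x)"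
proof -
  have b: "\<And>k. 0 \<le> af k \<and> af k \<le> 1 / fact k"
    by (rule coef_bound[where p=0]) (use af_rec in \<open>auto simp: af_def\<close>)
  have sm: "summable (\<lambda>n. gapc af 0 n * y^n)" for y
    using gap_sums[of 0 af y, OF _ summable_sums[OF gap_summable[OF b, of y 0]]] by (auto simp: sums_iff)
  have dd: "\<And>n. diffs (diffs (gapc af 0)) n = (if n = 0 then 0 else gapc af 0 (n - 1))"
    by (rule gap_diffs) (use af_rec in auto)
  have fe: "airy_f = (\<lambda>x. \<Sum>n. gapc af 0 n * x^n)" using airy_f_eq by auto
  show ?thesis unfolding fe using series_ode[OF sm dd]
    by (intro exI[of _ "\<lambda>x. \<Sum>n. diffs (gapc af 0) n * x^n"] allI conjI)
qed

lemma airy_g_ode: "\<exists>f1. \<forall>x. (airy_g has_real_derivative f1 x) (at x) \<and> (f1 has_real_derivative x * airy_g x) (at x)"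
proof -
  have b: "\<And>k. 0 \<le> ag k \<and> ag k \<le> 1 / fact k"
    by (rule coef_bound[where p=1]) (use ag_rec in \<open>auto simp: ag_def algebra_simps\<close>)
  have sm: "summable (\<lambda>n. gapc ag 1 n * y^n)" for y
    using gap_sums[of 1 ag y, OF _ summable_sums[OF gap_summable[OF b, of y 1]]] by (auto simp: sums_iff)
  have dd: "\<And>n. diffs (diffs (gapc ag 1)) n = (if n = 0 then 0 else gapc ag 1 (n - 1))"
    by (rule gap_diffs) (use ag_rec in \<open>auto simp: algebra_simps\<close>)
  have fe: "airy_g = (\<lambda>x. \<Sum>n. gapc ag 1 n * x^n)" using airy_g_eq by auto
  show ?thesis unfolding fe using series_ode[OF sm dd]
    by (intro exI[of _ "\<lambda>x. \<Sum>n. diffs (gapc ag 1) n * x^n"] allI conjI)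
qed

lemma airy_ode:
  "\<exists>A1 B1. \<forall>x. (Ai has_real_derivative A1 x) (at x) \<and> (A1 has_real_derivative x * Ai x) (at x)
              \<and> (Bi has_real_derivative B1 x) (at x) \<and> (B1 has_real_derivative x * Bi x) (at x)"
proof -
  obtain f1 where f1: "\<And>x. (airy_f has_real_derivative f1 x) (at x)" "\<And>x. (f1 has_real_derivative x * airy_f x) (at x)"
    using airy_f_ode by blast
  obtain g1 where g1: "\<And>x. (airy_g has_real_derivative g1 x) (at x)" "\<And>x. (g1 has_real_derivative x * airy_g x) (at x)"
    using airy_g_ode by blast
  define p where "p = 1 / (3 powr (2/3) * Gamma (2/3::real))"
  define q where "q = 1 / (3 powr (1/3) * Gamma (1/3::real))"
  have Ai: "Ai = (\<lambda>x. p * airy_f x - q * airy_g x)" by (auto simp: Ai_def p_def q_def)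
  have Bi: "Bi = (\<lambda>x. sqrt 3 * (p * airy_f x + q * airy_g x))" by (auto simp: Bi_def p_def q_def)
  have d1: "(Ai has_real_derivative p * f1 x - q * g1 x) (at x)" for x unfolding Ai
    by (intro DERIV_diff DERIV_cmult f1 g1)
  have d2: "(Bi has_real_derivative sqrt 3 * (p * f1 x + q * g1 x)) (at x)" for x unfolding Bi
    by (intro DERIV_add DERIV_cmult f1 g1)
  have d3: "((\<lambda>x. p * f1 x - q * g1 x) has_real_derivative x * Ai x) (at x)" for x
  proof -
    have "((\<lambda>x. p * f1 x - q * g1 x) has_real_derivative p * (x * airy_f x) - q * (x * airy_g x)) (at x)"
      by (intro DERIV_diff DERIV_cmult f1 g1)
    then show ?thesis unfolding Ai by (simp add: algebra_simps)
  qed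
  have d4: "((\<lambda>x. sqrt 3 * (p * f1 x + q * g1 x)) has_real_derivative x * Bi x) (at x)" for x
  proof -
    have "((\<lambda>x. sqrt 3 * (p * f1 x + q * g1 x)) has_real_derivative sqrt 3 * (p * (x * airy_f x) + q * (x * airy_g x))) (at x)"
      by (intro DERIV_add DERIV_cmult f1 g1)
    then show ?thesis unfolding Bi by (simp add: algebra_simps)
  qed
  show ?thesis using d1 d2 d3 d4
    by (intro exI[of _ "\<lambda>x. p * f1 x - q * g1 x"] exI[of _ "\<lambda>x. sqrt 3 * (p * f1 x + q * g1 x)"]) blast
qed




lemma mat2_entries: "mat2 a b c d $ 1 $ 1 = a" "mat2 a b c d $ 1 $ 2 = b" "mat2 a b c d $ 2 $ 1 = c" "mat2 a b c d $ 2 $ 2 = d"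
  by (simp_all add: mat2_def)

lemma mat2_eqI: "(M::real^2^2) = mat2 (M$1$1) (M$1$2) (M$2$1) (M$2$2)"
  by (simp add: vec_eq_iff forall_2 mat2_def)

lemma mat2_mult: "mat2 a b c d ** mat2 e f g h = mat2 (a*e+b*g) (a*f+b*h) (c*e+d*g) (c*f+d*h)"
  by (simp add: vec_eq_iff forall_2 mat2_def matrix_matrix_mult_def sum_2)

lemma mat2_scaleR: "r *\<^sub>R mat2 a b c d = mat2 (r*a) (r*b) (r*c) (r*d)"
  by (simp add: vec_eq_iff forall_2 mat2_def)

lemma mat2_add: "mat2 a b c d + mat2 e f g h = mat2 (a+e) (b+f) (c+g) (d+h)"
  by (simp add: vec_eq_iff forall_2 mat2_def)

lemma mat2_diff: "mat2 a b c d - mat2 e f g h = mat2 (a-e) (b-f) (c-g) (d-h)"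
  by (simp add: vec_eq_iff forall_2 mat2_def)

lemma mat2_decomp: "mat2 a b c d = a *\<^sub>R mat2 1 0 0 0 + b *\<^sub>R mat2 0 1 0 0 + c *\<^sub>R mat2 0 0 1 0 + d *\<^sub>R mat2 0 0 0 1"
  by (simp add: vec_eq_iff forall_2 mat2_def)

lemma norm_mat2: "norm (mat2 a b c d) = sqrt (a^2 + b^2 + c^2 + d^2)"
  by (simp add: norm_mat2x2 mat2_entries)

lemma norm_mat2_le: "norm (mat2 a b c d) \<le> \<bar>a\<bar> + \<bar>b\<bar> + \<bar>c\<bar> + \<bar>d\<bar>"
proof -
  have n1: "norm (mat2 1 0 0 0) = 1" "norm (mat2 0 1 0 0) = 1" "norm (mat2 0 0 1 0) = 1" "norm (mat2 0 0 0 1) = 1"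
    by (simp_all add: norm_mat2)
  have "norm (mat2 a b c d) \<le> norm (a *\<^sub>R mat2 1 0 0 0) + norm (b *\<^sub>R mat2 0 1 0 0) + norm (c *\<^sub>R mat2 0 0 1 0) + norm (d *\<^sub>R mat2 0 0 0 1)"
    unfolding mat2_decomp[of a b c d] by (meson add_mono norm_triangle_ineq order_trans order_refl)
  then show ?thesis using n1 by simp
qed

lemma vd_scale: "(f has_real_derivative d) (at z) \<Longrightarrow> ((\<lambda>z. f z *\<^sub>R (E::real^2^2)) has_vector_derivative d *\<^sub>R E) (at z)"
  using has_vector_derivative_scaleR[OF _ has_vector_derivative_const, of f d z UNIV E] by simp

lemma mat2_deriv:
  assumes "(f1 has_real_derivative d1) (at z)" "(f2 has_real_derivative d2) (at z)"
    "(f3 has_real_derivative d3) (at z)" "(f4 has_real_derivative d4) (at z)"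
  shows "((\<lambda>z. mat2 (f1 z) (f2 z) (f3 z) (f4 z)) has_vector_derivative mat2 d1 d2 d3 d4) (at z)"
  unfolding mat2_decomp[of "f1 _"] mat2_decomp[of d1]
  by (intro has_vector_derivative_add vd_scale assms)

lemma airy_matrix:
  fixes c :: real assumes c: "c > 0"
  shows "(airy_limit c has_vector_derivative (c *\<^sub>R mat2 0 1 z 0) ** airy_limit c z) (at z)"
proof -
  obtain A1 B1 where AB: "\<And>x. (Ai has_real_derivative A1 x) (at x)" "\<And>x. (A1 has_real_derivative x * Ai x) (at x)"
    "\<And>x. (Bi has_real_derivative B1 x) (at x)" "\<And>x. (B1 has_real_derivative x * Bi x) (at x)"
    using airy_ode by blast
  have dA: "deriv Ai = A1" "deriv Bi = B1" by (rule ext, rule DERIV_imp_deriv, rule AB(1), rule ext, rule DERIV_imp_deriv, rule AB(3))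
  define k where "k = c powr (2/3)"
  define m where "m = c powr (-1/3)"
  have km: "k = c * m" unfolding k_def m_def using c by (simp add: powr_add[symmetric] powr_mult_base)
  have mkk: "m * k * k = c" unfolding k_def m_def using c
    by (simp add: powr_add[symmetric] )
  have Y: "airy_limit c = (\<lambda>z. mat2 (Ai (k*z)) (Bi (k*z)) (m * A1 (k*z)) (m * B1 (k*z)))"
    unfolding airy_limit_def dA k_def m_def by auto
  have lin: "((\<lambda>z. k * z) has_real_derivative k) (at z)" by (rule derivative_eq_intros refl)+ simp
  have "((\<lambda>z. mat2 (Ai (k*z)) (Bi (k*z)) (m * A1 (k*z)) (m * B1 (k*z))) has_vector_derivative
        mat2 (A1 (k*z) * k) (B1 (k*z) * k) (m * ((k*z) * Ai (k*z) * k)) (m * ((k*z) * Bi (k*z) * k))) (at z)"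
    by (intro mat2_deriv DERIV_cmult DERIV_chain2[OF AB(1) lin] DERIV_chain2[OF AB(3) lin]
        DERIV_chain2[OF AB(2) lin] DERIV_chain2[OF AB(4) lin])
  moreover have "mat2 (A1 (k*z) * k) (B1 (k*z) * k) (m * ((k*z) * Ai (k*z) * k)) (m * ((k*z) * Bi (k*z) * k))
      = (c *\<^sub>R mat2 0 1 z 0) ** mat2 (Ai (k*z)) (Bi (k*z)) (m * A1 (k*z)) (m * B1 (k*z))"
  proof -
    have e1: "m * ((k*z) * Ai (k*z) * k) = c * z * Ai (k*z)" using mkk by (simp add: algebra_simps)
    have e2: "m * ((k*z) * Bi (k*z) * k) = c * z * Bi (k*z)" using mkk by (simp add: algebra_simps)
    show ?thesis unfolding mat2_scaleR mat2_mult e1 e2 by (simp add: km algebra_simps)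
  qed
  ultimately show ?thesis unfolding Y by simp
qed

lemma airy_integral:
  fixes c a :: real assumes c: "c > 0"
  shows "continuous_on S (airy_limit c)"
    and "\<forall>z\<in>{a..b}. airy_limit c z = airy_limit c a + integral {a..z} (\<lambda>s. (c *\<^sub>R mat2 0 1 s 0) ** airy_limit c s)"
proof -
  have d: "\<And>z. (airy_limit c has_vector_derivative (c *\<^sub>R mat2 0 1 z 0) ** airy_limit c z) (at z)"
    using airy_matrix[OF c] .
  show "continuous_on S (airy_limit c)"
    by (rule continuous_at_imp_continuous_on) (use d has_vector_derivative_continuous in blast)
  show "\<forall>z\<in>{a..b}. airy_limit c z = airy_limit c a + integral {a..z} (\<lambda>s. (c *\<^sub>R mat2 0 1 s 0) ** airy_limit c s)"
  proof
    fix z assume "z \<in> {a..b}"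
    then have az: "a \<le> z" by simp
    have "((\<lambda>s. (c *\<^sub>R mat2 0 1 s 0) ** airy_limit c s) has_integral (airy_limit c z - airy_limit c a)) {a..z}"
      by (rule fundamental_theorem_of_calculus[OF az]) (use d has_vector_derivative_at_within in blast)
    then show "airy_limit c z = airy_limit c a + integral {a..z} (\<lambda>s. (c *\<^sub>R mat2 0 1 s 0) ** airy_limit c s)"
      by (simp add: integral_unique)
  qed
qed




lemma matrix_inv_eqI:
  fixes A X :: "real^2^2"
  assumes "A ** X = mat 1" "X ** A = mat 1"
  shows "matrix_inv A = X"
  unfolding matrix_inv_def
proof (rule some_equality)
  show "A ** X = mat 1 \<and> X ** A = mat 1" using assms by simp
  fix Y assume "A ** Y = mat 1 \<and> Y ** A = mat 1"
  then have "Y = Y ** (A ** X)" using assms by simp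
  also have "\<dots> = (Y ** A) ** X" by (simp add: matrix_mul_assoc)
  also have "\<dots> = X" using \<open>A ** Y = mat 1 \<and> Y ** A = mat 1\<close> by simp
  finally show "Y = X" .
qed

lemma mat1_mat2: "(mat 1 :: real^2^2) = mat2 1 0 0 1"
  by (simp add: vec_eq_iff forall_2 mat2_def mat_def)

lemma T_inv:
  assumes "u \<noteq> 0"
  shows "matrix_inv (mat2 1 u 1 (-u)) = mat2 (1/2) (1/2) (1/(2*u)) (-1/(2*u))"
  by (rule matrix_inv_eqI) (use assms in \<open>simp_all add: mat2_mult mat1_mat2 field_simps\<close>)

lemma T_III_eq: "T_III \<beta> \<gamma> t = mat2 1 (\<beta> / t powr \<gamma> + 1/2) 1 (- (\<beta> / t powr \<gamma> + 1/2))"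
  unfolding T_III_def by simp

lemma abs_powr_between:
  fixes x lo hi a :: real
  assumes "a \<le> 0" "0 < lo" "lo \<le> x" "x \<le> hi"
  shows "\<bar>x powr a - 1\<bar> \<le> \<bar>lo powr a - 1\<bar> + \<bar>hi powr a - 1\<bar>"
proof -
  have "x powr a \<le> lo powr a" by (rule powr_mono2') (use assms in auto)
  moreover have "hi powr a \<le> x powr a" by (rule powr_mono2') (use assms in auto)
  ultimately show ?thesis by linarith
qed

lemma ai_scale:
  fixes M :: "real \<Rightarrow> real^2^2"
  assumes "continuous_on {a..b} k" "M absolutely_integrable_on {a..b}"
  shows "(\<lambda>s. k s *\<^sub>R M s) absolutely_integrable_on {a..b}"
proof -
  have "(\<lambda>s. (k s *\<^sub>R mat 1) ** M s) absolutely_integrable_on {a..b}"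
    by (rule ai_mm_left[OF assms(2)]) (intro continuous_intros assms(1))
  then show ?thesis by (simp add: mm_scaleR_l)
qed


lemma norm_matmul3: "norm ((A::real^2^2) ** (B::real^2^2) ** (C::real^2^2)) \<le> norm A * norm B * norm C"
proof -
  have "norm (A ** B ** C) \<le> norm (A ** B) * norm C" by (rule norm_matmul)
  also have "\<dots> \<le> norm A * norm B * norm C" by (rule mult_right_mono[OF norm_matmul norm_ge_zero])
  finally show ?thesis .
qed

lemma continuous_on_mat2[continuous_intros]:
  "continuous_on S f1 \<Longrightarrow> continuous_on S f2 \<Longrightarrow> continuous_on S f3 \<Longrightarrow> continuous_on S f4 \<Longrightarrow>
   continuous_on S (\<lambda>s. mat2 (f1 s) (f2 s) (f3 s) (f4 s))"
  unfolding mat2_decomp[of "f1 _"] by (intro continuous_intros)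

definition pp :: "real \<Rightarrow> real" where "pp \<gamma> = 1 - 1/(2*\<gamma>)"
definition tmin :: "real \<Rightarrow> real \<Rightarrow> real" where "tmin \<beta> \<gamma> = t0 \<beta> \<gamma> * (1/2) powr (1/(2*\<gamma>))"
definition U1 :: "real \<Rightarrow> real \<Rightarrow> real" where "U1 \<beta> \<gamma> = \<beta> / tmin \<beta> \<gamma> powr \<gamma> + 1/2"
definition S1 :: "real \<Rightarrow> real \<Rightarrow> real" where "S1 \<beta> \<gamma> = 2*\<beta>*\<gamma> / tmin \<beta> \<gamma> powr (1+\<gamma>)"
definition Kq :: "real \<Rightarrow> real" where "Kq \<gamma> = 1 / ((1/2) powr pp \<gamma>)"
definition CT :: "real \<Rightarrow> real \<Rightarrow> real" where "CT \<beta> \<gamma> = 2 + 2 * U1 \<beta> \<gamma>"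
definition C1 :: "real \<Rightarrow> real \<Rightarrow> real" where "C1 \<beta> \<gamma> = c0 \<beta> \<gamma> * Kq \<gamma> * 9 * S1 \<beta> \<gamma>"
definition C2 :: "real \<Rightarrow> real \<Rightarrow> real" where "C2 \<beta> \<gamma> = c0 \<beta> \<gamma> * Kq \<gamma> * 27 * CT \<beta> \<gamma>"
definition Phi :: "real \<Rightarrow> real \<Rightarrow> real" where "Phi a \<eta> = \<bar>(1-\<eta>) powr a - 1\<bar> + \<bar>(1+\<eta>) powr a - 1\<bar>"

lemma good_eps:
  fixes \<beta> \<gamma> z0 \<epsilon> s :: real and R :: "real \<Rightarrow> real \<Rightarrow> real^2^2"
  assumes \<beta>: "\<beta> > 0" and \<gamma>: "1/2 < \<gamma>" "\<gamma> < 1" and z0: "z0 > 0" and \<epsilon>: "0 < \<epsilon>" "\<epsilon> \<le> 1"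
    and \<eta>: "\<epsilon> powr (2/3) * z0 \<le> 1/2" and s: "s \<in> {-z0..z0}"
  shows "norm (R_III2 \<beta> \<gamma> R s \<epsilon>) \<le> c0 \<beta> \<gamma> * (Phi (- pp \<gamma>) (\<epsilon> powr (2/3) * z0) + z0 * Phi (- (pp \<gamma> + 1)) (\<epsilon> powr (2/3) * z0))
      + C1 \<beta> \<gamma> * \<epsilon> powr (1/3) + C2 \<beta> \<gamma> / \<epsilon> powr (2/3) * norm (R (tz \<beta> \<gamma> s \<epsilon>) \<epsilon>)"
proof -
  define c where "c = c0 \<beta> \<gamma>"
  define e23 where "e23 = \<epsilon> powr (2/3)"
  define \<eta> where "\<eta> = e23 * z0"
  define q where "q = 1 - e23 * s"
  define p where "p = 1 - 1/(2*\<gamma>)"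
  define T0 where "T0 = t0 \<beta> \<gamma>"
  define t where "t = tz \<beta> \<gamma> s \<epsilon>"
  define u where "u = \<beta> / t powr \<gamma> + 1/2"
  define \<sigma> where "\<sigma> = - (\<epsilon> * \<beta> * \<gamma>) / (t powr (1 + \<gamma>) * (\<beta> / t powr \<gamma> + 1/2))"
  define D1 where "D1 = mat2 (\<epsilon> powr (1/3)) 0 0 (-2)"
  define D2 where "D2 = mat2 2 0 0 (- (\<epsilon> powr (1/3)))"
  define Rt where "Rt = R t \<epsilon>"
  have R2eq: "R_III2 \<beta> \<gamma> R s \<epsilon> = c *\<^sub>R ((1 / q powr p) *\<^sub>R mat2 0 1 (s / q) 0 - mat2 0 1 s 0)
     - (c / (e23 * q powr p)) *\<^sub>R (D1 ** (\<sigma> *\<^sub>R mat2 0 0 0 1 + matrix_inv (T_III \<beta> \<gamma> t) ** Rt ** T_III \<beta> \<gamma> t) ** D2)"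
    unfolding R_III2_def R_III1_def c_def e23_def q_def p_def t_def \<sigma>_def D1_def D2_def Rt_def by simp
  have e23: "e23 > 0" unfolding e23_def using \<epsilon> by simp
  have p: "0 < p" "p < 1" unfolding p_def using \<gamma> by (auto simp: field_simps)
  have pp: "pp \<gamma> = p" unfolding pp_def p_def ..
  have \<eta>h: "\<eta> \<le> 1/2" "\<eta> \<ge> 0" unfolding \<eta>_def e23_def using \<eta> z0 by auto
  have qb: "1 - \<eta> \<le> q" "q \<le> 1 + \<eta>"
  proof -
    have "\<bar>e23 * s\<bar> \<le> \<eta>" unfolding \<eta>_def using e23 s by (auto simp: abs_mult intro!: mult_left_mono)
    then show "1 - \<eta> \<le> q" "q \<le> 1 + \<eta>" unfolding q_def by auto
  qed
  have q2: "q \<ge> 1/2" using qb \<eta>h by linarith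
  have qpos: "q > 0" using q2 by linarith
  have T0: "T0 > 0" unfolding T0_def t0_def using \<beta> by simp
  have teq: "t = T0 * q powr (1/(2*\<gamma>))" unfolding t_def tz_def T0_def q_def e23_def ..
  have tmin: "tmin \<beta> \<gamma> > 0" unfolding tmin_def using T0 by (simp add: T0_def)
  have tge: "t \<ge> tmin \<beta> \<gamma>"
  proof -
    have "(1/2) powr (1/(2*\<gamma>)) \<le> q powr (1/(2*\<gamma>))" by (rule powr_mono2) (use \<gamma> q2 in auto)
    then show ?thesis unfolding teq tmin_def T0_def[symmetric] using T0 by simp
  qed
  have tpos: "t > 0" using tge tmin by linarith
  have tg: "t powr \<gamma> \<ge> tmin \<beta> \<gamma> powr \<gamma>" by (rule powr_mono2) (use \<gamma> tge tmin in auto)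
  have tg1: "t powr (1+\<gamma>) \<ge> tmin \<beta> \<gamma> powr (1+\<gamma>)" by (rule powr_mono2) (use \<gamma> tge tmin in auto)
  have tmg: "tmin \<beta> \<gamma> powr \<gamma> > 0" "tmin \<beta> \<gamma> powr (1+\<gamma>) > 0" using tmin by auto
  have u1: "u \<ge> 1/2" unfolding u_def using \<beta> tpos by simp
  have u2: "u \<le> U1 \<beta> \<gamma>"
  proof -
    have "\<beta> / t powr \<gamma> \<le> \<beta> / tmin \<beta> \<gamma> powr \<gamma>" by (rule divide_left_mono) (use \<beta> tg tmg tpos in \<open>auto intro!: mult_pos_pos\<close>)
    then show ?thesis unfolding u_def U1_def by simp
  qed
  have Teq: "T_III \<beta> \<gamma> t = mat2 1 u 1 (-u)" unfolding T_III_eq u_def ..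
  have Tieq: "matrix_inv (T_III \<beta> \<gamma> t) = mat2 (1/2) (1/2) (1/(2*u)) (-1/(2*u))"
    unfolding Teq by (rule T_inv) (use u1 in auto)
  have nTi: "norm (matrix_inv (T_III \<beta> \<gamma> t)) \<le> 3"
  proof -
    have "norm (matrix_inv (T_III \<beta> \<gamma> t)) \<le> \<bar>1/2\<bar> + \<bar>1/2\<bar> + \<bar>1/(2*u)\<bar> + \<bar>-1/(2*u)\<bar>"
      unfolding Tieq by (rule norm_mat2_le)
    also have "\<dots> = 1 + 1/u" using u1 by simp
    also have "\<dots> \<le> 3" using u1 by (simp add: field_simps)
    finally show ?thesis .
  qed
  have nT: "norm (T_III \<beta> \<gamma> t) \<le> CT \<beta> \<gamma>"
  proof -
    have "norm (T_III \<beta> \<gamma> t) \<le> \<bar>1\<bar> + \<bar>u\<bar> + \<bar>1\<bar> + \<bar>-u\<bar>" unfolding Teq by (rule norm_mat2_le)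
    also have "\<dots> \<le> CT \<beta> \<gamma>" unfolding CT_def using u1 u2 by simp
    finally show ?thesis .
  qed
  have n\<sigma>: "\<bar>\<sigma>\<bar> \<le> \<epsilon> * S1 \<beta> \<gamma>"
  proof -
    have "\<bar>\<sigma>\<bar> = (\<epsilon> * \<beta> * \<gamma>) / (t powr (1 + \<gamma>) * u)" unfolding \<sigma>_def u_def[symmetric]
      using \<epsilon> \<beta> \<gamma> u1 tpos by (simp add: abs_divide abs_mult)
    also have "\<dots> \<le> (\<epsilon> * \<beta> * \<gamma>) / (tmin \<beta> \<gamma> powr (1+\<gamma>) * (1/2))"
    proof -
      have den: "tmin \<beta> \<gamma> powr (1+\<gamma>) * (1/2) \<le> t powr (1 + \<gamma>) * u"
        by (rule mult_mono) (use tg1 u1 tpos in auto)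
      show ?thesis by (rule divide_left_mono[OF den]) (use \<epsilon> \<beta> \<gamma> tmg tpos u1 in \<open>auto intro!: mult_pos_pos\<close>)
    qed
    also have "\<dots> = \<epsilon> * S1 \<beta> \<gamma>" unfolding S1_def by (simp add: field_simps)
    finally show ?thesis .
  qed
  have e13: "\<epsilon> powr (1/3) \<le> 1" using \<epsilon> by (intro powr_le1) auto
  have nD1: "norm D1 \<le> 3"
  proof -
    have "norm D1 \<le> \<bar>\<epsilon> powr (1/3)\<bar> + \<bar>0\<bar> + \<bar>0\<bar> + \<bar>-2\<bar>" unfolding D1_def by (rule norm_mat2_le)
    then show ?thesis using e13 by simp
  qed
  have nD2: "norm D2 \<le> 3"
  proof -
    have "norm D2 \<le> \<bar>2\<bar> + \<bar>0\<bar> + \<bar>0\<bar> + \<bar>- (\<epsilon> powr (1/3))\<bar>" unfolding D2_def by (rule norm_mat2_le)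
    then show ?thesis using e13 by simp
  qed
  have nE: "norm (mat2 0 0 0 (1::real)) = 1" by (simp add: norm_mat2)
  have nR1: "norm (\<sigma> *\<^sub>R mat2 0 0 0 1 + matrix_inv (T_III \<beta> \<gamma> t) ** Rt ** T_III \<beta> \<gamma> t) \<le> \<epsilon> * S1 \<beta> \<gamma> + 3 * CT \<beta> \<gamma> * norm Rt"
  proof -
    have "norm (matrix_inv (T_III \<beta> \<gamma> t) ** Rt ** T_III \<beta> \<gamma> t) \<le> norm (matrix_inv (T_III \<beta> \<gamma> t)) * norm Rt * norm (T_III \<beta> \<gamma> t)"
      by (rule norm_matmul3)
    also have "\<dots> \<le> 3 * norm Rt * CT \<beta> \<gamma>"
      using nTi nT by (intro mult_mono) auto
    also have "\<dots> = 3 * CT \<beta> \<gamma> * norm Rt" by (simp add: ac_simps)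
    finally have "norm (matrix_inv (T_III \<beta> \<gamma> t) ** Rt ** T_III \<beta> \<gamma> t) \<le> 3 * CT \<beta> \<gamma> * norm Rt" .
    moreover have "norm (\<sigma> *\<^sub>R mat2 0 0 0 (1::real)) \<le> \<epsilon> * S1 \<beta> \<gamma>" using n\<sigma> nE by simp
    ultimately show ?thesis using norm_triangle_ineq[of "\<sigma> *\<^sub>R mat2 0 0 0 (1::real)" "matrix_inv (T_III \<beta> \<gamma> t) ** Rt ** T_III \<beta> \<gamma> t"] by linarith
  qed
  have nDRD: "norm (D1 ** (\<sigma> *\<^sub>R mat2 0 0 0 1 + matrix_inv (T_III \<beta> \<gamma> t) ** Rt ** T_III \<beta> \<gamma> t) ** D2) \<le> 9 * (\<epsilon> * S1 \<beta> \<gamma> + 3 * CT \<beta> \<gamma> * norm Rt)"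
  proof -
    let ?M = "\<sigma> *\<^sub>R mat2 0 0 0 1 + matrix_inv (T_III \<beta> \<gamma> t) ** Rt ** T_III \<beta> \<gamma> t"
    have "norm (D1 ** ?M ** D2) \<le> norm D1 * norm ?M * norm D2"
      by (rule norm_matmul3)
    also have "\<dots> \<le> 3 * (\<epsilon> * S1 \<beta> \<gamma> + 3 * CT \<beta> \<gamma> * norm Rt) * 3"
      using nD1 nD2 nR1 order_trans[OF norm_ge_zero nR1] by (intro mult_mono) auto
    finally show ?thesis by simp
  qed
  have qp: "q powr p \<ge> (1/2) powr p" by (rule powr_mono2) (use p q2 in auto)
  have kb: "\<bar>c / (e23 * q powr p)\<bar> \<le> c * Kq \<gamma> / e23"
  proof -
    have c: "c > 0" unfolding c_def c0_def t0_def using \<beta> \<gamma> by simp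
    have "\<bar>c / (e23 * q powr p)\<bar> = c / (e23 * q powr p)" using c e23 qpos by simp
    also have "\<dots> \<le> c / (e23 * (1/2) powr p)"
      by (rule divide_left_mono) (use c e23 qp qpos in \<open>auto intro!: mult_left_mono mult_pos_pos\<close>)
    also have "\<dots> = c * Kq \<gamma> / e23" unfolding Kq_def pp by simp
    finally show ?thesis .
  qed
  have P: "norm (c *\<^sub>R ((1 / q powr p) *\<^sub>R mat2 0 1 (s / q) 0 - mat2 0 1 s 0)) \<le> c * (Phi (- p) \<eta> + z0 * Phi (- (p + 1)) \<eta>)"
  proof -
    have c: "c > 0" unfolding c_def c0_def t0_def using \<beta> \<gamma> by simp
    have e1: "1 / q powr p = q powr (- p)" by (simp add: powr_minus_divide)
    have e2a: "q powr (p + 1) = q powr p * q" using qpos by (simp add: powr_add)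
    have e2: "1 / q powr p * (s / q) = s * q powr (- (p + 1))"
      unfolding powr_minus_divide e2a by simp
    have "(1 / q powr p) *\<^sub>R mat2 0 1 (s / q) 0 - mat2 0 1 s 0 = mat2 0 (q powr (- p) - 1) 0 0 + mat2 0 0 (s * (q powr (- (p + 1)) - 1)) 0"
      unfolding mat2_scaleR mat2_diff mat2_add using e1 e2 by (simp add: algebra_simps)
    then have "norm ((1 / q powr p) *\<^sub>R mat2 0 1 (s / q) 0 - mat2 0 1 s 0) \<le> \<bar>q powr (- p) - 1\<bar> + \<bar>s\<bar> * \<bar>q powr (- (p + 1)) - 1\<bar>"
      using norm_mat2_le[of 0 "q powr (- p) - 1" 0 0] norm_mat2_le[of 0 0 "s * (q powr (- (p + 1)) - 1)" 0]
      using norm_triangle_ineq[of "mat2 0 (q powr (- p) - 1) 0 0" "mat2 0 0 (s * (q powr (- (p + 1)) - 1)) 0"] by (simp add: abs_mult)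
    also have "\<dots> \<le> Phi (- p) \<eta> + z0 * Phi (- (p + 1)) \<eta>"
    proof -
      have lo: "0 < 1 - \<eta>" using \<eta>h by simp
      have a1: "\<bar>q powr (- p) - 1\<bar> \<le> Phi (- p) \<eta>" unfolding Phi_def
        by (rule abs_powr_between) (use p lo qb in auto)
      have a2: "\<bar>q powr (- (p+1)) - 1\<bar> \<le> Phi (- (p+1)) \<eta>" unfolding Phi_def
        by (rule abs_powr_between) (use p lo qb in auto)
      have "\<bar>s\<bar> * \<bar>q powr (- (p + 1)) - 1\<bar> \<le> z0 * Phi (- (p+1)) \<eta>"
        using s a2 by (intro mult_mono) auto
      then show ?thesis using a1 by linarith
    qed
    finally show ?thesis using c by (simp add: mult_left_mono)
  qed
  have "norm (R_III2 \<beta> \<gamma> R s \<epsilon>) \<le> c * (Phi (- p) \<eta> + z0 * Phi (- (p + 1)) \<eta>)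
      + (c * Kq \<gamma> / e23) * (9 * (\<epsilon> * S1 \<beta> \<gamma> + 3 * CT \<beta> \<gamma> * norm Rt))"
  proof -
    let ?X = "D1 ** (\<sigma> *\<^sub>R mat2 0 0 0 1 + matrix_inv (T_III \<beta> \<gamma> t) ** Rt ** T_III \<beta> \<gamma> t) ** D2"
    have "norm ((c / (e23 * q powr p)) *\<^sub>R ?X) \<le> (c * Kq \<gamma> / e23) * (9 * (\<epsilon> * S1 \<beta> \<gamma> + 3 * CT \<beta> \<gamma> * norm Rt))"
    proof -
      have "norm ((c / (e23 * q powr p)) *\<^sub>R ?X) = \<bar>c / (e23 * q powr p)\<bar> * norm ?X" by (rule norm_scaleR)
      also have "\<dots> \<le> (c * Kq \<gamma> / e23) * (9 * (\<epsilon> * S1 \<beta> \<gamma> + 3 * CT \<beta> \<gamma> * norm Rt))"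
        by (rule mult_mono[OF kb nDRD]) (use order_trans[OF abs_ge_zero kb] in auto)
      finally show ?thesis .
    qed
    then show ?thesis unfolding R2eq using P norm_triangle_ineq4[of "c *\<^sub>R ((1 / q powr p) *\<^sub>R mat2 0 1 (s / q) 0 - mat2 0 1 s 0)" "(c / (e23 * q powr p)) *\<^sub>R ?X"] by linarith
  qed
  also have "\<dots> = c * (Phi (- p) \<eta> + z0 * Phi (- (p + 1)) \<eta>) + C1 \<beta> \<gamma> * (\<epsilon> / e23) + C2 \<beta> \<gamma> / e23 * norm Rt"
    unfolding C1_def C2_def c_def using e23 by (simp add: field_simps)
  also have "\<epsilon> / e23 = \<epsilon> powr (1/3)"
  proof -
    have "\<epsilon> = \<epsilon> powr (1/3) * \<epsilon> powr (2/3)" using \<epsilon> by (simp add: powr_add[symmetric])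
    then show ?thesis unfolding e23_def using \<epsilon> by (metis e23 e23_def nonzero_mult_div_cancel_right order_less_irrefl)
  qed
  finally show ?thesis unfolding c_def \<eta>_def e23_def pp Rt_def t_def .
qed


lemma good_eps_ai:
  fixes \<beta> \<gamma> z0 \<epsilon> :: real and R :: "real \<Rightarrow> real \<Rightarrow> real^2^2"
  assumes \<beta>: "\<beta> > 0" and \<gamma>: "1/2 < \<gamma>" "\<gamma> < 1" and z0: "z0 > 0" and \<epsilon>: "0 < \<epsilon>" "\<epsilon> \<le> 1"
    and \<eta>: "\<epsilon> powr (2/3) * z0 \<le> 1/2"
    and Rai: "(\<lambda>s. R (tz \<beta> \<gamma> s \<epsilon>) \<epsilon>) absolutely_integrable_on {-z0..z0}"
  shows "(\<lambda>s. R_III2 \<beta> \<gamma> R s \<epsilon>) absolutely_integrable_on {-z0..z0}"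
proof -
  define I where "I = {-z0..z0}"
  define c where "c = c0 \<beta> \<gamma>"
  define e23 where "e23 = \<epsilon> powr (2/3)"
  define p where "p = 1 - 1/(2*\<gamma>)"
  define qf where "qf = (\<lambda>s. 1 - e23 * s)"
  define tf where "tf = (\<lambda>s. tz \<beta> \<gamma> s \<epsilon>)"
  define uf where "uf = (\<lambda>s. \<beta> / tf s powr \<gamma> + 1/2)"
  define \<sigma>f where "\<sigma>f = (\<lambda>s. - (\<epsilon> * \<beta> * \<gamma>) / (tf s powr (1 + \<gamma>) * (\<beta> / tf s powr \<gamma> + 1/2)))"
  define Tif where "Tif = (\<lambda>s. mat2 (1/2) (1/2) (1/(2 * uf s)) (-1/(2 * uf s)))"
  define Tmf where "Tmf = (\<lambda>s. mat2 1 (uf s) 1 (- (uf s)))"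
  define kf where "kf = (\<lambda>s. c / (e23 * qf s powr p))"
  define Pf where "Pf = (\<lambda>s. c *\<^sub>R ((1 / qf s powr p) *\<^sub>R mat2 0 1 (s / qf s) 0 - mat2 0 1 s 0))"
  define D1 where "D1 = mat2 (\<epsilon> powr (1/3)) 0 0 (-2)"
  define D2 where "D2 = mat2 2 0 0 (- (\<epsilon> powr (1/3)))"
  define Rt where "Rt = (\<lambda>s. R (tf s) \<epsilon>)"
  have e23: "e23 > 0" unfolding e23_def using \<epsilon> by simp
  have qpos: "qf s > 0" if "s \<in> I" for s
  proof -
    have "\<bar>e23 * s\<bar> \<le> e23 * z0" using e23 that by (auto simp: I_def abs_mult intro!: mult_left_mono)
    then show ?thesis using \<eta> unfolding qf_def e23_def by auto
  qed
  have T0: "t0 \<beta> \<gamma> > 0" unfolding t0_def using \<beta> by simp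
  have tfeq: "tf s = t0 \<beta> \<gamma> * qf s powr (1/(2*\<gamma>))" for s unfolding tf_def tz_def qf_def e23_def ..
  have tpos: "tf s > 0" if "s \<in> I" for s using qpos[OF that] T0 unfolding tfeq by simp
  have upos: "uf s > 0" if "s \<in> I" for s unfolding uf_def using tpos[OF that] \<beta>
    by (simp add: add_pos_nonneg)
  have R2eq: "R_III2 \<beta> \<gamma> R s \<epsilon> = Pf s - kf s *\<^sub>R (D1 ** (\<sigma>f s *\<^sub>R mat2 0 0 0 1 + Tif s ** Rt s ** Tmf s) ** D2)"
    if "s \<in> I" for s
  proof -
    have Teq: "T_III \<beta> \<gamma> (tf s) = Tmf s" unfolding T_III_eq Tmf_def uf_def ..
    have Tieq: "matrix_inv (Tmf s) = Tif s"
      unfolding Tmf_def Tif_def by (rule T_inv) (use upos[OF that] in auto)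
    have tfs: "tz \<beta> \<gamma> s \<epsilon> = tf s" by (simp add: tf_def)
    show ?thesis
      unfolding R_III2_def R_III1_def tfs Tieq Teq Pf_def kf_def c_def e23_def qf_def p_def \<sigma>f_def D1_def D2_def Rt_def
      by simp
  qed
  have cq: "continuous_on I qf" unfolding qf_def by (intro continuous_intros)
  have ct: "continuous_on I tf" unfolding tfeq[abs_def]
    by (intro continuous_intros cq) (auto dest: qpos)
  have cu: "continuous_on I uf" unfolding uf_def
    by (intro continuous_intros ct) (auto dest: tpos)
  have c\<sigma>: "continuous_on I \<sigma>f" unfolding \<sigma>f_def uf_def[symmetric]
    by (intro continuous_intros ct cu) (auto dest: tpos upos simp: uf_def)
  have cTi: "continuous_on I Tif" unfolding Tif_def
    by (intro continuous_intros cu) (auto dest: upos)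
  have cTm: "continuous_on I Tmf" unfolding Tmf_def by (intro continuous_intros cu)
  have ck: "continuous_on I kf" unfolding kf_def
    by (intro continuous_intros cq) (use e23 in \<open>auto dest: qpos\<close>)
  have cP: "continuous_on I Pf" unfolding Pf_def
    by (intro continuous_intros cq) (auto dest: qpos)
  have RtI: "Rt absolutely_integrable_on I" using Rai unfolding Rt_def tf_def I_def .
  have a1: "(\<lambda>s. Tif s ** Rt s ** Tmf s) absolutely_integrable_on I"
    unfolding I_def by (intro ai_mm_right ai_mm_left) (use RtI cTi cTm in \<open>auto simp: I_def\<close>)
  have a2: "(\<lambda>s. \<sigma>f s *\<^sub>R mat2 0 0 0 1) absolutely_integrable_on I"
    unfolding I_def by (rule absolutely_integrable_continuous_real) (use c\<sigma> in \<open>auto simp: I_def intro!: continuous_intros\<close>)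
  have a3: "(\<lambda>s. \<sigma>f s *\<^sub>R mat2 0 0 0 1 + Tif s ** Rt s ** Tmf s) absolutely_integrable_on I"
    using a2 a1 by (rule set_integral_add)
  have a4: "(\<lambda>s. D1 ** (\<sigma>f s *\<^sub>R mat2 0 0 0 1 + Tif s ** Rt s ** Tmf s) ** D2) absolutely_integrable_on I"
    unfolding I_def by (intro ai_mm_right ai_mm_left) (use a3 in \<open>auto simp: I_def\<close>)
  have a5: "(\<lambda>s. kf s *\<^sub>R (D1 ** (\<sigma>f s *\<^sub>R mat2 0 0 0 1 + Tif s ** Rt s ** Tmf s) ** D2)) absolutely_integrable_on I"
    unfolding I_def by (rule ai_scale) (use ck a4 in \<open>auto simp: I_def\<close>)
  have a6: "Pf absolutely_integrable_on I"
    unfolding I_def by (rule absolutely_integrable_continuous_real) (use cP in \<open>auto simp: I_def\<close>)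
  have "(\<lambda>s. Pf s - kf s *\<^sub>R (D1 ** (\<sigma>f s *\<^sub>R mat2 0 0 0 1 + Tif s ** Rt s ** Tmf s) ** D2)) absolutely_integrable_on I"
    using a6 a5 by (rule set_integral_diff)
  then have "(\<lambda>s. R_III2 \<beta> \<gamma> R s \<epsilon>) absolutely_integrable_on I"
    by (rule absolutely_integrable_spike[where S="{}"]) (auto simp: R2eq)
  then show ?thesis unfolding I_def .
qed




lemma Phi_tendsto:
  fixes a :: real and F
  assumes "(h \<longlongrightarrow> 0) F"
  shows "((\<lambda>x. Phi a (h x)) \<longlongrightarrow> 0) F"
proof -
  have "((\<lambda>x. \<bar>(1 - h x) powr a - 1\<bar> + \<bar>(1 + h x) powr a - 1\<bar>) \<longlongrightarrow> \<bar>(1 - 0) powr a - 1\<bar> + \<bar>(1 + 0) powr a - 1\<bar>) F"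
    by (intro tendsto_intros assms) auto
  then show ?thesis unfolding Phi_def by simp
qed

theorem lemma9p1:
  fixes \<beta> \<gamma> z0 :: real and R :: "real \<Rightarrow> real \<Rightarrow> real^2^2"
  assumes "\<beta> > 0" and "1/2 < \<gamma>" and "\<gamma> < 1" and "z0 > 0"
    and "\<forall>\<^sub>F \<epsilon> in at_right 0.
           (\<lambda>s. R (tz \<beta> \<gamma> s \<epsilon>) \<epsilon>) absolutely_integrable_on {-z0..z0}"
    and "(\<lambda>\<epsilon>. integral {-z0..z0} (\<lambda>s. norm (R (tz \<beta> \<gamma> s \<epsilon>) \<epsilon>)))
           \<in> o[at_right 0](\<lambda>\<epsilon>. \<epsilon> powr (2/3))"
  shows "\<exists>U :: real \<Rightarrow> real \<Rightarrow> real^2^2.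
    (\<forall>\<^sub>F \<epsilon> in at_right 0.
       (\<lambda>s. (c0 \<beta> \<gamma> *\<^sub>R mat2 0 1 s 0 + R_III2 \<beta> \<gamma> R s \<epsilon>) ** U s \<epsilon>)
          absolutely_integrable_on {-z0..z0} \<and>
       (\<forall>z\<in>{-z0..z0}. U z \<epsilon> = U (-z0) \<epsilon> +
          integral {-z0..z} (\<lambda>s. (c0 \<beta> \<gamma> *\<^sub>R mat2 0 1 s 0 + R_III2 \<beta> \<gamma> R s \<epsilon>) ** U s \<epsilon>)))
    \<and> (\<forall>z\<in>{-z0..z0}. ((\<lambda>\<epsilon>. U z \<epsilon>) \<longlongrightarrow> airy_limit (c0 \<beta> \<gamma>) z) (at_right 0))"
proof -
  note \<beta> = assms(1) and \<gamma> = assms(2,3) and z0 = assms(4) and Rai = assms(5) and Ro = assms(6)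
  define c where "c = c0 \<beta> \<gamma>"
  have c: "c > 0" unfolding c_def c0_def t0_def using \<beta> \<gamma> by simp
  define I where "I = {-z0..z0}"
  define A where "A = (\<lambda>s::real. c *\<^sub>R mat2 0 1 s 0)"
  define Y where "Y = airy_limit c"
  have Acont: "continuous_on {-z0..z0} A" unfolding A_def by (intro continuous_intros)
  have Ycont: "continuous_on {-z0..z0} Y" unfolding Y_def by (rule airy_integral(1)[OF c])
  have Yeq: "\<forall>z\<in>{-z0..z0}. Y z = Y (-z0) + integral {-z0..z} (\<lambda>s. A s ** Y s)"
    unfolding Y_def A_def by (rule airy_integral(2)[OF c])
  have ab: "-z0 \<le> z0" using z0 by simp
  obtain K where K: "\<forall>B \<delta>. B absolutely_integrable_on {-z0..z0} \<and> integral {-z0..z0} (\<lambda>s. norm (B s)) \<le> \<delta> \<and> \<delta> \<le> 1/4 \<longrightarrow>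
     (\<exists>U. continuous_on {-z0..z0} U \<and> (\<lambda>s. (A s + B s) ** U s) absolutely_integrable_on {-z0..z0}
        \<and> (\<forall>z\<in>{-z0..z0}. U z = U (-z0) + integral {-z0..z} (\<lambda>s. (A s + B s) ** U s))
        \<and> (\<forall>z\<in>{-z0..z0}. norm (U z - Y z) \<le> K * \<delta>))"
    using volterra[OF ab Acont Ycont Yeq] by blast
  define \<eta> where "\<eta> = (\<lambda>\<epsilon>::real. \<epsilon> powr (2/3) * z0)"
  define J where "J = (\<lambda>\<epsilon>. integral {-z0..z0} (\<lambda>s. norm (R (tz \<beta> \<gamma> s \<epsilon>) \<epsilon>)))"
  define Cst where "Cst = (\<lambda>\<epsilon>. c * (Phi (- pp \<gamma>) (\<eta> \<epsilon>) + z0 * Phi (- (pp \<gamma> + 1)) (\<eta> \<epsilon>)) + C1 \<beta> \<gamma> * \<epsilon> powr (1/3))"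
  define \<delta> where "\<delta> = (\<lambda>\<epsilon>. 2 * z0 * Cst \<epsilon> + C2 \<beta> \<gamma> * (J \<epsilon> / \<epsilon> powr (2/3)))"
  have lim0: "((\<lambda>\<epsilon>::real. \<epsilon> powr a) \<longlongrightarrow> 0) (at_right 0)" if "a > 0" for a
  proof -
    have "((\<lambda>\<epsilon>::real. \<epsilon> powr a) \<longlongrightarrow> 0 powr a) (at_right 0)"
    proof (intro tendsto_intros)
      show "0 \<noteq> (0::real) \<or> 0 < a \<and> (\<forall>\<^sub>F x in at_right 0. 0 \<le> (x::real))"
        using that eventually_at_right_less[of "0::real"] by (auto elim: eventually_mono)
    qed
    then show ?thesis by simp
  qed
  have \<eta>0: "(\<eta> \<longlongrightarrow> 0) (at_right 0)" unfolding \<eta>_def using tendsto_mult_left_zero[OF lim0[of "2/3"]] by simp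
  have p1: "((\<lambda>\<epsilon>. Phi (- pp \<gamma>) (\<eta> \<epsilon>)) \<longlongrightarrow> 0) (at_right 0)" by (rule Phi_tendsto[OF \<eta>0])
  have p2: "((\<lambda>\<epsilon>. Phi (- (pp \<gamma> + 1)) (\<eta> \<epsilon>)) \<longlongrightarrow> 0) (at_right 0)" by (rule Phi_tendsto[OF \<eta>0])
  have l13: "((\<lambda>\<epsilon>::real. \<epsilon> powr (1/3)) \<longlongrightarrow> 0) (at_right 0)" by (rule lim0) simp
  have Cst0: "(Cst \<longlongrightarrow> 0) (at_right 0)" unfolding Cst_def
    using tendsto_add[OF tendsto_mult[OF tendsto_const tendsto_add[OF p1 tendsto_mult[OF tendsto_const p2]]]
       tendsto_mult[OF tendsto_const l13], of c z0 "C1 \<beta> \<gamma>"]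
    by simp
  have J0: "((\<lambda>\<epsilon>. J \<epsilon> / \<epsilon> powr (2/3)) \<longlongrightarrow> 0) (at_right 0)"
    unfolding J_def by (rule smalloD_tendsto[OF Ro])
  have \<delta>0: "(\<delta> \<longlongrightarrow> 0) (at_right 0)" unfolding \<delta>_def
    using tendsto_add[OF tendsto_mult[OF tendsto_const Cst0] tendsto_mult[OF tendsto_const J0], of "2 * z0" "C2 \<beta> \<gamma>"] by simp
  have ev1: "\<forall>\<^sub>F \<epsilon> in at_right 0. \<delta> \<epsilon> \<le> 1/4"
    using order_tendstoD(2)[OF \<delta>0, of "1/4"] by (auto elim: eventually_mono)
  have ev2: "\<forall>\<^sub>F \<epsilon> in at_right 0. \<eta> \<epsilon> \<le> 1/2"
    using order_tendstoD(2)[OF \<eta>0, of "1/2"] by (auto elim: eventually_mono)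
  have ev3: "\<forall>\<^sub>F \<epsilon> in at_right (0::real). 0 < \<epsilon> \<and> \<epsilon> \<le> 1"
    unfolding eventually_at_right_field by (intro exI[of _ 1]) auto
  define Q where "Q = (\<lambda>\<epsilon> U. continuous_on {-z0..z0} U \<and> (\<lambda>s. (A s + R_III2 \<beta> \<gamma> R s \<epsilon>) ** U s) absolutely_integrable_on {-z0..z0}
        \<and> (\<forall>z\<in>{-z0..z0}. U z = U (-z0) + integral {-z0..z} (\<lambda>s. (A s + R_III2 \<beta> \<gamma> R s \<epsilon>) ** U s))
        \<and> (\<forall>z\<in>{-z0..z0}. norm (U z - Y z) \<le> K * \<delta> \<epsilon>))"
  have evQ: "\<forall>\<^sub>F \<epsilon> in at_right 0. \<exists>U. Q \<epsilon> U"
    using ev1 ev2 ev3 Rai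
  proof eventually_elim
    case (elim \<epsilon>)
    then have \<epsilon>: "0 < \<epsilon>" "\<epsilon> \<le> 1" and \<eta>\<epsilon>: "\<epsilon> powr (2/3) * z0 \<le> 1/2" and d14: "\<delta> \<epsilon> \<le> 1/4"
      and Ri: "(\<lambda>s. R (tz \<beta> \<gamma> s \<epsilon>) \<epsilon>) absolutely_integrable_on {-z0..z0}"
      by (auto simp: \<eta>_def)
    have Bai: "(\<lambda>s. R_III2 \<beta> \<gamma> R s \<epsilon>) absolutely_integrable_on {-z0..z0}"
      by (rule good_eps_ai[of \<beta> \<gamma> z0 \<epsilon> R, OF \<beta> \<gamma> z0 \<epsilon> \<eta>\<epsilon> Ri])
    have nRi: "(\<lambda>s. norm (R (tz \<beta> \<gamma> s \<epsilon>) \<epsilon>)) integrable_on {-z0..z0}"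
      using Ri by (simp add: absolutely_integrable_on_def)
    have "integral {-z0..z0} (\<lambda>s. norm (R_III2 \<beta> \<gamma> R s \<epsilon>)) \<le>
          integral {-z0..z0} (\<lambda>s. Cst \<epsilon> + C2 \<beta> \<gamma> / \<epsilon> powr (2/3) * norm (R (tz \<beta> \<gamma> s \<epsilon>) \<epsilon>))"
    proof (rule integral_le)
      show "(\<lambda>s. norm (R_III2 \<beta> \<gamma> R s \<epsilon>)) integrable_on {-z0..z0}"
        using Bai by (simp add: absolutely_integrable_on_def)
      show "(\<lambda>s. Cst \<epsilon> + C2 \<beta> \<gamma> / \<epsilon> powr (2/3) * norm (R (tz \<beta> \<gamma> s \<epsilon>) \<epsilon>)) integrable_on {-z0..z0}"
        by (intro integrable_add integrable_on_mult_right nRi integrable_const_ivl)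
      fix s assume "s \<in> {-z0..z0}"
      then show "norm (R_III2 \<beta> \<gamma> R s \<epsilon>) \<le> Cst \<epsilon> + C2 \<beta> \<gamma> / \<epsilon> powr (2/3) * norm (R (tz \<beta> \<gamma> s \<epsilon>) \<epsilon>)"
        using good_eps[of \<beta> \<gamma> z0 \<epsilon> s R, OF \<beta> \<gamma> z0 \<epsilon> \<eta>\<epsilon>] unfolding Cst_def \<eta>_def c_def by simp
    qed
    also have "\<dots> = \<delta> \<epsilon>"
    proof -
      have "integral {-z0..z0} (\<lambda>s. Cst \<epsilon> + C2 \<beta> \<gamma> / \<epsilon> powr (2/3) * norm (R (tz \<beta> \<gamma> s \<epsilon>) \<epsilon>))
          = integral {-z0..z0} (\<lambda>s. Cst \<epsilon>) + integral {-z0..z0} (\<lambda>s. C2 \<beta> \<gamma> / \<epsilon> powr (2/3) * norm (R (tz \<beta> \<gamma> s \<epsilon>) \<epsilon>))"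
        by (intro integral_add integrable_on_mult_right nRi integrable_const_ivl)
      also have "\<dots> = 2 * z0 * Cst \<epsilon> + C2 \<beta> \<gamma> / \<epsilon> powr (2/3) * J \<epsilon>"
        using z0 by (simp add: J_def)
      finally show ?thesis unfolding \<delta>_def by simp
    qed
    finally have "integral {-z0..z0} (\<lambda>s. norm (R_III2 \<beta> \<gamma> R s \<epsilon>)) \<le> \<delta> \<epsilon>" .
    then show "\<exists>U. Q \<epsilon> U" unfolding Q_def using K[rule_format, of "\<lambda>s. R_III2 \<beta> \<gamma> R s \<epsilon>" "\<delta> \<epsilon>"] Bai d14 by blast
  qed
  define U where "U = (\<lambda>z \<epsilon>. (SOME V. Q \<epsilon> V) z)"
  have evU: "\<forall>\<^sub>F \<epsilon> in at_right 0. Q \<epsilon> (\<lambda>z. U z \<epsilon>)"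
    using evQ
  proof eventually_elim
    case (elim \<epsilon>)
    then show ?case unfolding U_def using someI_ex[of "Q \<epsilon>"] by simp
  qed
  show ?thesis
  proof (intro exI[of _ U] conjI ballI)
    show "\<forall>\<^sub>F \<epsilon> in at_right 0.
       (\<lambda>s. (c0 \<beta> \<gamma> *\<^sub>R mat2 0 1 s 0 + R_III2 \<beta> \<gamma> R s \<epsilon>) ** U s \<epsilon>) absolutely_integrable_on {-z0..z0} \<and>
       (\<forall>z\<in>{-z0..z0}. U z \<epsilon> = U (-z0) \<epsilon> +
          integral {-z0..z} (\<lambda>s. (c0 \<beta> \<gamma> *\<^sub>R mat2 0 1 s 0 + R_III2 \<beta> \<gamma> R s \<epsilon>) ** U s \<epsilon>))"
      using evU by eventually_elim (unfold Q_def A_def c_def, blast)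
    fix z assume z: "z \<in> {-z0..z0}"
    have "((\<lambda>\<epsilon>. U z \<epsilon> - Y z) \<longlongrightarrow> 0) (at_right 0)"
    proof (rule Lim_null_comparison)
      show "\<forall>\<^sub>F \<epsilon> in at_right 0. norm (U z \<epsilon> - Y z) \<le> K * \<delta> \<epsilon>"
        using evU by eventually_elim (unfold Q_def, use z in blast)
      show "((\<lambda>\<epsilon>. K * \<delta> \<epsilon>) \<longlongrightarrow> 0) (at_right 0)" using tendsto_mult[OF tendsto_const \<delta>0, of K] by simp
    qed
    then show "((\<lambda>\<epsilon>. U z \<epsilon>) \<longlongrightarrow> airy_limit (c0 \<beta> \<gamma>) z) (at_right 0)"
      unfolding Y_def c_def by (rule LIM_zero_cancel)
  qed
qed


end
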